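(* Let $G=G_1\ast\cdots\ast G_n$ be a free product of finitely many nontrivial finite groups and let $L(G)$ be the complex defined in the context, with the action of $\Sigma Aut(G)=Aut(G)$. Then the stabilizer in $\Sigma Aut(G)$ of any simplex of $L(G)$ is finite.
   Context: Since the $G_i$ are finite, every automorphism of $G$ is symmetric, i.e. maps each $G_i$ to a conjugate of some $G_j$; $\Sigma Aut(G)=Aut(G)$. A basis of $G$ is a set $\mathcal{H}=\{H_1,\dots,H_n\}$ of subgroups with $H_i$ conjugate to $G_i$ and $G=H_1\ast\cdots\ast H_n$. A pointed labelled tree is a finite bipartite tree whose vertices are labelled (labels $\ast$ and the members of the basis, each once) or unlabelled, each edge joining a labelled and an unlabelled vertex, unlabelled vertices of valence at least 2, $\ast$ of valence 1. For a labelled vertex $k$, the petals at $k$ are the label sets of components of $T-\{k\}$, forming a partition $\underline{\underline{A}}(k)$; the tree is identified with the family $\underline{\underline{A}}$. $\underline{\underline{A}}\le\underline{\underline{B}}$ means every petal of each $\underline{\underline{A}}(k)$ is a union of petals of $\underline{\underline{B}}(k)$. For a basis $\mathcal{H}$, a factor index $k$ and $x_j\in H_k$ ($x_k=1$), the symmetric Whitehead automorphism $(\mathcal{H},x)$ acts on $H_j$ by $h\mapsto x_jhx_j^{-1}$ and trivially on $H_k$; it is carried by $(\mathcal{H},\underline{\underline{A}})$ if $x$ is constant on petals of $\underline{\underline{A}}(k)$ and trivial on the petal containing $\ast$. Pairs $(\mathcal{H},\underline{\underline{A}})$ and $(\rho(\mathcal{H}),\underline{\underline{A}})$ (labels transported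 along $\rho$), $\rho$ a product of symmetric Whitehead automorphisms carried by $(\mathcal{H},\underline{\underline{A}})$, are identified; classes $[\mathcal{H},\underline{\underline{A}}]$ are ordered by: $[\mathcal{H},\underline{\underline{A}}]\le[\mathcal{K},\underline{\underline{B}}]$ iff they have representatives with a common basis and trees $\underline{\underline{A}}\le\underline{\underline{B}}$. $L(G)$ is the realization of this poset, and $\phi\in Aut(G)$ acts by $\phi\cdot[\mathcal{H},\underline{\underline{A}}]=[\phi(\mathcal{H}),\phi(\underline{\underline{A}})]$, relabelling each vertex labelled $H$ by $\phi(H)$. *)

theory Defs
  imports "HOL-Algebra.Algebra"
begin

definition Aut :: "('a, 'b) monoid_scheme \<Rightarrow> ('a \<Rightarrow> 'a) set" where
  "Aut G = {\<phi>. \<phi> \<in> iso G G \<and> \<phi> \<in> extensional (carrier G)}"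

definition reduced_word ::
  "('a, 'b) monoid_scheme \<Rightarrow> ('i \<Rightarrow> 'a set) \<Rightarrow> 'i set \<Rightarrow> ('i \<times> 'a) list \<Rightarrow> bool" where
  "reduced_word G F I w \<longleftrightarrow>
     (\<forall>(i, g) \<in> set w. i \<in> I \<and> g \<in> F i \<and> g \<noteq> \<one>\<^bsub>G\<^esub>) \<and>
     (\<forall>j. Suc j < length w \<longrightarrow> fst (w ! j) \<noteq> fst (w ! Suc j))"

definition word_prod :: "('a, 'b) monoid_scheme \<Rightarrow> ('i \<times> 'a) list \<Rightarrow> 'a" where
  "word_prod G w = foldr (\<lambda>x y. x \<otimes>\<^bsub>G\<^esub> y) (map snd w) \<one>\<^bsub>G\<^esub>"

definition is_free_product :: "('a, 'b) monoid_scheme \<Rightarrow> ('i \<Rightarrow> 'a set) \<Rightarrow> 'i set \<Rightarrow> bool" where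
  "is_free_product G F I \<longleftrightarrow> group G \<and> (\<forall>i\<in>I. subgroup (F i) G) \<and>
     (\<forall>g \<in> carrier G. \<exists>!w. reduced_word G F I w \<and> word_prod G w = g)"

definition conj_set :: "('a, 'b) monoid_scheme \<Rightarrow> 'a \<Rightarrow> 'a set \<Rightarrow> 'a set" where
  "conj_set G g H = (\<lambda>h. g \<otimes>\<^bsub>G\<^esub> h \<otimes>\<^bsub>G\<^esub> inv\<^bsub>G\<^esub> g) ` H"

definition is_basis ::
  "('a, 'b) monoid_scheme \<Rightarrow> nat \<Rightarrow> (nat \<Rightarrow> 'a set) \<Rightarrow> 'a set set \<Rightarrow> bool" where
  "is_basis G n Gf \<H> \<longleftrightarrow> (\<exists>H. \<H> = H ` {..<n} \<and>
      (\<forall>i<n. \<exists>g\<in>carrier G. H i = conj_set G g (Gf i)) \<and> is_free_product G H {..<n})"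

datatype 'a lbl = Star | Fac "'a set"

text \<open>A finite graph on vertex set V (natural numbers), edge set E of 2-element sets,
  partial labelling lab (None = unlabelled).\<close>

definition adj_rel :: "nat set \<Rightarrow> nat set set \<Rightarrow> (nat \<times> nat) set" where
  "adj_rel W E = {(u, v). u \<in> W \<and> v \<in> W \<and> {u, v} \<in> E}"

definition valence :: "nat set set \<Rightarrow> nat \<Rightarrow> nat" where
  "valence E u = card {e \<in> E. u \<in> e}"

definition is_tree :: "nat set \<Rightarrow> nat set set \<Rightarrow> bool" where
  "is_tree V E \<longleftrightarrow> finite V \<and> V \<noteq> {} \<and>
     E \<subseteq> {{u, v} | u v. u \<in> V \<and> v \<in> V \<and> u \<noteq> v} \<and>
     (\<forall>u\<in>V. \<forall>v\<in>V. (u, v) \<in> (adj_rel V E)\<^sup>*) \<and>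
     card E + 1 = card V"

definition pointed_labelled_tree ::
  "'a lbl set \<Rightarrow> nat set \<Rightarrow> nat set set \<Rightarrow> (nat \<Rightarrow> 'a lbl option) \<Rightarrow> bool" where
  "pointed_labelled_tree Lb V E lab \<longleftrightarrow>
     is_tree V E \<and> Star \<in> Lb \<and>
     (\<forall>u\<in>V. \<forall>l. lab u = Some l \<longrightarrow> l \<in> Lb) \<and>
     (\<forall>l\<in>Lb. \<exists>!u. u \<in> V \<and> lab u = Some l) \<and>
     (\<forall>e\<in>E. \<exists>u v. e = {u, v} \<and> lab u \<noteq> None \<and> lab v = None) \<and>
     (\<forall>u\<in>V. lab u = None \<longrightarrow> valence E u \<ge> 2) \<and>
     (\<forall>u\<in>V. lab u = Some Star \<longrightarrow> valence E u = 1)"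

definition component_minus :: "nat set \<Rightarrow> nat set set \<Rightarrow> nat \<Rightarrow> nat \<Rightarrow> nat set" where
  "component_minus V E u v = {w. (v, w) \<in> (adj_rel (V - {u}) E)\<^sup>*}"

definition labels_of :: "(nat \<Rightarrow> 'a lbl option) \<Rightarrow> nat set \<Rightarrow> 'a lbl set" where
  "labels_of lab C = {l. \<exists>w\<in>C. lab w = Some l}"

text \<open>The family of petals: for each label k, the partition of the remaining labels
  given by the label sets of the components of T - {k}.\<close>
definition petal_family ::
  "nat set \<Rightarrow> nat set set \<Rightarrow> (nat \<Rightarrow> 'a lbl option) \<Rightarrow> 'a lbl \<Rightarrow> 'a lbl set set" where
  "petal_family V E lab k =
     {labels_of lab (component_minus V E u v) | u v. u \<in> V \<and> lab u = Some k \<and> v \<in> V - {u}}"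

definition tree_family :: "'a lbl set \<Rightarrow> ('a lbl \<Rightarrow> 'a lbl set set) \<Rightarrow> bool" where
  "tree_family Lb A \<longleftrightarrow>
     (\<exists>V E lab. pointed_labelled_tree Lb V E lab \<and> A = petal_family V E lab)"

definition tree_le :: "('a lbl \<Rightarrow> 'a lbl set set) \<Rightarrow> ('a lbl \<Rightarrow> 'a lbl set set) \<Rightarrow> bool" where
  "tree_le A B \<longleftrightarrow> (\<forall>k. \<forall>P\<in>A k. \<exists>S\<subseteq>B k. P = \<Union>S)"

definition basis_labels :: "'a set set \<Rightarrow> 'a lbl set" where
  "basis_labels \<H> = insert Star (Fac ` \<H>)"

fun map_lbl :: "('a \<Rightarrow> 'a) \<Rightarrow> 'a lbl \<Rightarrow> 'a lbl" where
  "map_lbl f Star = Star"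
| "map_lbl f (Fac H) = Fac (f ` H)"

definition relabel_fam ::
  "('a \<Rightarrow> 'a) \<Rightarrow> ('a lbl \<Rightarrow> 'a lbl set set) \<Rightarrow> 'a lbl \<Rightarrow> 'a lbl set set" where
  "relabel_fam f A l' = \<Union>{(\<lambda>P. map_lbl f ` P) ` A l | l. map_lbl f l = l'}"

definition whitehead_carried ::
  "('a, 'b) monoid_scheme \<Rightarrow> 'a set set \<Rightarrow> ('a lbl \<Rightarrow> 'a lbl set set) \<Rightarrow> ('a \<Rightarrow> 'a) \<Rightarrow> bool" where
  "whitehead_carried G \<H> A \<phi> \<longleftrightarrow>
     (\<exists>K\<in>\<H>. \<exists>x :: 'a set \<Rightarrow> 'a.
        x K = \<one>\<^bsub>G\<^esub> \<and> (\<forall>H\<in>\<H>. x H \<in> K) \<and>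
        (\<forall>P\<in>A (Fac K). \<forall>H1 H2. Fac H1 \<in> P \<longrightarrow> Fac H2 \<in> P \<longrightarrow> x H1 = x H2) \<and>
        (\<forall>P\<in>A (Fac K). Star \<in> P \<longrightarrow> (\<forall>H. Fac H \<in> P \<longrightarrow> x H = \<one>\<^bsub>G\<^esub>)) \<and>
        \<phi> \<in> Aut G \<and>
        (\<forall>H\<in>\<H>. \<forall>h\<in>H. \<phi> h = x H \<otimes>\<^bsub>G\<^esub> h \<otimes>\<^bsub>G\<^esub> inv\<^bsub>G\<^esub> (x H)))"

inductive_set whitehead_products ::
  "('a, 'b) monoid_scheme \<Rightarrow> 'a set set \<Rightarrow> ('a lbl \<Rightarrow> 'a lbl set set) \<Rightarrow> ('a \<Rightarrow> 'a) set"
  for G \<H> A where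
  wp_id: "(\<lambda>g\<in>carrier G. g) \<in> whitehead_products G \<H> A"
| wp_step: "whitehead_carried G \<H> A \<phi> \<Longrightarrow> \<rho> \<in> whitehead_products G \<H> A \<Longrightarrow>
            compose (carrier G) \<phi> \<rho> \<in> whitehead_products G \<H> A"

type_synonym 'a marked = "'a set set \<times> ('a lbl \<Rightarrow> 'a lbl set set)"

definition marked_tree ::
  "('a, 'b) monoid_scheme \<Rightarrow> nat \<Rightarrow> (nat \<Rightarrow> 'a set) \<Rightarrow> 'a marked \<Rightarrow> bool" where
  "marked_tree G n Gf p \<longleftrightarrow>
     is_basis G n Gf (fst p) \<and> tree_family (basis_labels (fst p)) (snd p)"

definition act_marked :: "('a \<Rightarrow> 'a) \<Rightarrow> 'a marked \<Rightarrow> 'a marked" where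
  "act_marked \<phi> p = ((`) \<phi> ` fst p, relabel_fam \<phi> (snd p))"

definition ident_step ::
  "('a, 'b) monoid_scheme \<Rightarrow> nat \<Rightarrow> (nat \<Rightarrow> 'a set) \<Rightarrow> ('a marked \<times> 'a marked) set" where
  "ident_step G n Gf = {(p, act_marked \<rho> p) | p \<rho>.
      marked_tree G n Gf p \<and> \<rho> \<in> whitehead_products G (fst p) (snd p)}"

definition ident ::
  "('a, 'b) monoid_scheme \<Rightarrow> nat \<Rightarrow> (nat \<Rightarrow> 'a set) \<Rightarrow> ('a marked \<times> 'a marked) set" where
  "ident G n Gf = (ident_step G n Gf \<union> (ident_step G n Gf)\<inverse>)\<^sup>*"

definition mclass ::
  "('a, 'b) monoid_scheme \<Rightarrow> nat \<Rightarrow> (nat \<Rightarrow> 'a set) \<Rightarrow> 'a marked \<Rightarrow> 'a marked set" where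
  "mclass G n Gf p = {q. (p, q) \<in> ident G n Gf}"

definition L_vertices ::
  "('a, 'b) monoid_scheme \<Rightarrow> nat \<Rightarrow> (nat \<Rightarrow> 'a set) \<Rightarrow> 'a marked set set" where
  "L_vertices G n Gf = {mclass G n Gf p | p. marked_tree G n Gf p}"

definition L_le :: "'a marked set \<Rightarrow> 'a marked set \<Rightarrow> bool" where
  "L_le c d \<longleftrightarrow> (\<exists>\<H> A B. (\<H>, A) \<in> c \<and> (\<H>, B) \<in> d \<and> tree_le A B)"

text \<open>Simplices of the realization of the poset: finite nonempty chains.\<close>
definition L_simplex ::
  "('a, 'b) monoid_scheme \<Rightarrow> nat \<Rightarrow> (nat \<Rightarrow> 'a set) \<Rightarrow> 'a marked set set \<Rightarrow> bool" where
  "L_simplex G n Gf \<sigma> \<longleftrightarrow> finite \<sigma> \<and> \<sigma> \<noteq> {} \<and> \<sigma> \<subseteq> L_vertices G n Gf \<and>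
     (\<forall>c\<in>\<sigma>. \<forall>d\<in>\<sigma>. L_le c d \<or> L_le d c)"

definition act_class ::
  "('a, 'b) monoid_scheme \<Rightarrow> nat \<Rightarrow> (nat \<Rightarrow> 'a set) \<Rightarrow> ('a \<Rightarrow> 'a) \<Rightarrow> 'a marked set \<Rightarrow> 'a marked set" where
  "act_class G n Gf \<phi> c = {q. \<exists>p\<in>c. (act_marked \<phi> p, q) \<in> ident G n Gf}"

definition simplex_stabilizer ::
  "('a, 'b) monoid_scheme \<Rightarrow> nat \<Rightarrow> (nat \<Rightarrow> 'a set) \<Rightarrow> 'a marked set set \<Rightarrow> ('a \<Rightarrow> 'a) set" where
  "simplex_stabilizer G n Gf \<sigma> = {\<phi> \<in> Aut G. act_class G n Gf \<phi> ` \<sigma> = \<sigma>}"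

end

theory Submission
  imports Defs
begin

lemma adj_sym: "(a,b) \<in> adj_rel W E \<Longrightarrow> (b,a) \<in> adj_rel W E"
  unfolding adj_rel_def by (auto simp: insert_commute)

lemma adj_rtr_sym: "(a,b) \<in> (adj_rel W E)\<^sup>* \<Longrightarrow> (b,a) \<in> (adj_rel W E)\<^sup>*"
proof (induction rule: rtrancl_induct)
  case base then show ?case by simp
next
  case (step y z)
  have "(z,y) \<in> adj_rel W E" using adj_sym[OF step(2)] .
  then show ?case using step(3) by (rule converse_rtrancl_into_rtrancl)
qed

lemma adj_mono: "W \<subseteq> W' \<Longrightarrow> adj_rel W E \<subseteq> adj_rel W' E"
  unfolding adj_rel_def by auto

lemma adj_rtr_mono: "W \<subseteq> W' \<Longrightarrow> (a,b) \<in> (adj_rel W E)\<^sup>* \<Longrightarrow> (a,b) \<in> (adj_rel W' E)\<^sup>*"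
  using adj_mono[of W W' E] rtrancl_mono[of "adj_rel W E" "adj_rel W' E"] by blast

lemma adj_rtr_end: "(a,b) \<in> (adj_rel W E)\<^sup>* \<Longrightarrow> b = a \<or> b \<in> W"
  by (induction rule: rtrancl_induct) (auto simp: adj_rel_def)

lemma first_hit:
  assumes "(a,b) \<in> (adj_rel W E)\<^sup>*" "a \<noteq> v"
  shows "(a,b) \<in> (adj_rel (W - {v}) E)\<^sup>* \<or>
         (\<exists>y. (a,y) \<in> (adj_rel (W - {v}) E)\<^sup>* \<and> (y,v) \<in> adj_rel W E)"
  using assms(1)
proof (induction rule: rtrancl_induct)
  case base then show ?case by simp
next
  case (step b c)
  then consider "(a,b) \<in> (adj_rel (W - {v}) E)\<^sup>*"
    | "\<exists>y. (a,y) \<in> (adj_rel (W - {v}) E)\<^sup>* \<and> (y,v) \<in> adj_rel W E" by blast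
  then show ?case
  proof cases
    case 1
    show ?thesis
    proof (cases "c = v")
      case True then show ?thesis using 1 step(2) by blast
    next
      case False
      have "b = a \<or> b \<in> W - {v}" using adj_rtr_end[OF 1] .
      then have "b \<in> W - {v}" using assms(2) step(2) by (auto simp: adj_rel_def)
      moreover have "c \<in> W - {v}" using False step(2) by (auto simp: adj_rel_def)
      ultimately have "(b,c) \<in> adj_rel (W - {v}) E" using step(2) by (auto simp: adj_rel_def)
      then show ?thesis using 1 by (meson rtrancl.rtrancl_into_rtrancl)
    qed
  next
    case 2 then show ?thesis by blast
  qed
qed

lemma hit:
  assumes "(a,b) \<in> (adj_rel W E)\<^sup>*"
  shows "(a,b) \<in> (adj_rel (W - {v}) E)\<^sup>* \<or> (a,v) \<in> (adj_rel W E)\<^sup>*"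
proof (cases "a = v")
  case True then show ?thesis by simp
next
  case False
  from first_hit[OF assms False] show ?thesis
  proof
    assume "(a, b) \<in> (adj_rel (W - {v}) E)\<^sup>*" then show ?thesis by blast
  next
    assume "\<exists>y. (a, y) \<in> (adj_rel (W - {v}) E)\<^sup>* \<and> (y, v) \<in> adj_rel W E"
    then obtain y where "(a, y) \<in> (adj_rel (W - {v}) E)\<^sup>*" "(y, v) \<in> adj_rel W E" by blast
    moreover have "(a, y) \<in> (adj_rel W E)\<^sup>*" by (rule adj_rtr_mono[OF _ calculation(1)]) auto
    ultimately show ?thesis by (meson rtrancl.rtrancl_into_rtrancl)
  qed
qed

lemma hit2:
  assumes "(a,b) \<in> (adj_rel (V - {k}) E)\<^sup>*" "(a,b) \<notin> (adj_rel (V - {l}) E)\<^sup>*"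
  shows "(a,l) \<in> (adj_rel (V - {k}) E)\<^sup>*"
proof -
  have "V - {k} - {l} \<subseteq> V - {l}" by auto
  then show ?thesis using hit[OF assms(1), of l] assms(2) adj_rtr_mono[of "V - {k} - {l}" "V - {l}" a b E] by blast
qed

lemma step_in:
  assumes "(y,k) \<in> adj_rel V E" "y \<in> V - {l}" "k \<noteq> l"
  shows "(y,k) \<in> adj_rel (V - {l}) E"
  using assms by (auto simp: adj_rel_def)

lemma tree_antisym:
  assumes conn: "(s,k) \<in> (adj_rel V E)\<^sup>*" and "s \<noteq> k" "s \<noteq> k'" "k \<noteq> k'"
  shows "(s,k') \<in> (adj_rel (V - {k}) E)\<^sup>* \<or> (s,k) \<in> (adj_rel (V - {k'}) E)\<^sup>*"
proof -
  from first_hit[OF conn \<open>s \<noteq> k\<close>] consider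
     "(s,k) \<in> (adj_rel (V - {k}) E)\<^sup>*"
   | y where "(s,y) \<in> (adj_rel (V - {k}) E)\<^sup>*" "(y,k) \<in> adj_rel V E" by blast
  then show ?thesis
  proof cases
    case 1 then show ?thesis using adj_rtr_end[OF 1] \<open>s \<noteq> k\<close> by auto
  next
    case 2
    from hit[OF 2(1), of k'] show ?thesis
    proof
      assume h: "(s, y) \<in> (adj_rel (V - {k} - {k'}) E)\<^sup>*"
      then have a: "(s, y) \<in> (adj_rel (V - {k'}) E)\<^sup>*" by (rule adj_rtr_mono[rotated]) auto
      have "y = s \<or> y \<in> V - {k} - {k'}" using adj_rtr_end[OF h] .
      then have "y \<in> V - {k'}" using assms 2(2) by (auto simp: adj_rel_def)
      then have "(y,k) \<in> adj_rel (V - {k'}) E" using step_in[OF 2(2)] assms by auto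
      then show ?thesis using a by (meson rtrancl.rtrancl_into_rtrancl)
    qed auto
  qed
qed

lemma tree_total:
  assumes conn: "(h,k) \<in> (adj_rel V E)\<^sup>*" and "h \<noteq> k" "h \<noteq> k'" "k \<noteq> k'" "k \<in> V"
    and a: "(s,k') \<in> (adj_rel (V - {k}) E)\<^sup>*" and b: "(s,k) \<in> (adj_rel (V - {k'}) E)\<^sup>*"
  shows "(s,h) \<in> (adj_rel (V - {k}) E)\<^sup>* \<or> (s,h) \<in> (adj_rel (V - {k'}) E)\<^sup>*"
proof -
  from first_hit[OF conn \<open>h \<noteq> k\<close>] consider
     "(h,k) \<in> (adj_rel (V - {k}) E)\<^sup>*"
   | y where "(h,y) \<in> (adj_rel (V - {k}) E)\<^sup>*" "(y,k) \<in> adj_rel V E" by blast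
  then show ?thesis
  proof cases
    case 1 then show ?thesis using adj_rtr_end[OF 1] \<open>h \<noteq> k\<close> by auto
  next
    case 2
    from hit[OF 2(1), of k'] show ?thesis
    proof
      assume h: "(h, y) \<in> (adj_rel (V - {k} - {k'}) E)\<^sup>*"
      then have c: "(h, y) \<in> (adj_rel (V - {k'}) E)\<^sup>*" by (rule adj_rtr_mono[rotated]) auto
      have "y = h \<or> y \<in> V - {k} - {k'}" using adj_rtr_end[OF h] .
      then have "y \<in> V - {k'}" using assms 2(2) by (auto simp: adj_rel_def)
      then have "(y,k) \<in> adj_rel (V - {k'}) E" using step_in[OF 2(2)] assms by auto
      then have "(k,y) \<in> adj_rel (V - {k'}) E" by (rule adj_sym)
      then have "(k,h) \<in> (adj_rel (V - {k'}) E)\<^sup>*" using adj_rtr_sym[OF c]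
        by (meson converse_rtrancl_into_rtrancl)
      then show ?thesis using b by (meson rtrancl_trans)
    next
      assume "(h, k') \<in> (adj_rel (V - {k}) E)\<^sup>*"
      then have "(k', h) \<in> (adj_rel (V - {k}) E)\<^sup>*" by (rule adj_rtr_sym)
      then show ?thesis using a by (meson rtrancl_trans)
    qed
  qed
qed

lemma tree_after:
  assumes c1: "(s,k) \<in> (adj_rel V E)\<^sup>*" and c2: "(h,k) \<in> (adj_rel V E)\<^sup>*"
    and "s \<noteq> k" "h \<noteq> k" "s \<noteq> l" "k \<noteq> l" "h \<noteq> l" "k \<in> V"
    and nsl: "(s,l) \<notin> (adj_rel (V - {k}) E)\<^sup>*"
    and nsh: "(s,h) \<notin> (adj_rel (V - {l}) E)\<^sup>*"
  shows "(l,h) \<in> (adj_rel (V - {k}) E)\<^sup>*"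
proof (rule ccontr)
  assume nlh: "(l,h) \<notin> (adj_rel (V - {k}) E)\<^sup>*"
  from first_hit[OF c1 \<open>s \<noteq> k\<close>] adj_rtr_end[of s k "V - {k}" E] \<open>s \<noteq> k\<close>
  obtain y1 where y1: "(s,y1) \<in> (adj_rel (V - {k}) E)\<^sup>*" "(y1,k) \<in> adj_rel V E" by auto
  from first_hit[OF c2 \<open>h \<noteq> k\<close>] adj_rtr_end[of h k "V - {k}" E] \<open>h \<noteq> k\<close>
  obtain y2 where y2: "(h,y2) \<in> (adj_rel (V - {k}) E)\<^sup>*" "(y2,k) \<in> adj_rel V E" by auto
  have s1: "(s,y1) \<in> (adj_rel (V - {k} - {l}) E)\<^sup>*" using hit[OF y1(1), of l] nsl by blast
  have s2: "(h,y2) \<in> (adj_rel (V - {k} - {l}) E)\<^sup>*"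
    using hit[OF y2(1), of l] nlh adj_rtr_sym by blast
  have "y1 = s \<or> y1 \<in> V - {k} - {l}" using adj_rtr_end[OF s1] .
  then have "y1 \<in> V - {l}" using assms y1(2) by (auto simp: adj_rel_def)
  then have e1: "(y1,k) \<in> adj_rel (V - {l}) E" using step_in[OF y1(2)] assms by auto
  have "y2 = h \<or> y2 \<in> V - {k} - {l}" using adj_rtr_end[OF s2] .
  then have "y2 \<in> V - {l}" using assms y2(2) by (auto simp: adj_rel_def)
  then have e2: "(k,y2) \<in> adj_rel (V - {l}) E" using step_in[OF y2(2)] assms adj_sym by blast
  have p1: "(s,y1) \<in> (adj_rel (V - {l}) E)\<^sup>*" by (rule adj_rtr_mono[OF _ s1]) auto
  have p2: "(y2,h) \<in> (adj_rel (V - {l}) E)\<^sup>*" by (rule adj_rtr_mono[OF _ adj_rtr_sym[OF s2]]) auto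
  have "(s,h) \<in> (adj_rel (V - {l}) E)\<^sup>*"
    using p1 e1 e2 p2 by (meson rtrancl.rtrancl_into_rtrancl rtrancl_trans)
  then show False using nsh by simp
qed


lemma Aut_eq: "Aut G = auto G"
  unfolding Aut_def auto_def iso_def Bij_def by auto

lemma AG_carrier: "carrier (AutoGroup G) = auto G"
  by (simp add: AutoGroup_def BijGroup_def)

lemma AG_mult: "f \<in> auto G \<Longrightarrow> g \<in> auto G \<Longrightarrow> f \<otimes>\<^bsub>AutoGroup G\<^esub> g = compose (carrier G) f g"
  by (simp add: AutoGroup_def BijGroup_def auto_def)

lemma AG_one: "\<one>\<^bsub>AutoGroup G\<^esub> = (\<lambda>x\<in>carrier G. x)"
  by (simp add: AutoGroup_def BijGroup_def)

lemma auto_hom: "f \<in> auto G \<Longrightarrow> f \<in> hom G G"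
  by (simp add: auto_def)

lemma auto_in: "f \<in> auto G \<Longrightarrow> x \<in> carrier G \<Longrightarrow> f x \<in> carrier G"
  by (auto simp: auto_def hom_def)

lemma auto_funcset: "f \<in> auto G \<Longrightarrow> f \<in> carrier G \<rightarrow> carrier G"
  by (auto simp: auto_def hom_def)

lemma auto_ext: "f \<in> auto G \<Longrightarrow> f \<in> extensional (carrier G)"
  by (simp add: auto_def Bij_def)

lemma AG_mult_apply: "f \<in> auto G \<Longrightarrow> g \<in> auto G \<Longrightarrow> x \<in> carrier G \<Longrightarrow>
   (f \<otimes>\<^bsub>AutoGroup G\<^esub> g) x = f (g x)"
  by (simp add: AG_mult compose_def)

context group
begin

lemma AG_group: "group (AutoGroup G)" by (rule AutoGroup)

lemma AG_monoid: "monoid (AutoGroup G)" using AG_group by (rule group.is_monoid)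

lemma AG_inv_auto: "f \<in> auto G \<Longrightarrow> inv\<^bsub>AutoGroup G\<^esub> f \<in> auto G"
  using group.inv_closed[OF AG_group] by (simp add: AG_carrier)

lemma AG_inv_left: "f \<in> auto G \<Longrightarrow> x \<in> carrier G \<Longrightarrow> (inv\<^bsub>AutoGroup G\<^esub> f) (f x) = x"
proof -
  assume f: "f \<in> auto G" and x: "x \<in> carrier G"
  have "inv\<^bsub>AutoGroup G\<^esub> f \<otimes>\<^bsub>AutoGroup G\<^esub> f = \<one>\<^bsub>AutoGroup G\<^esub>"
    using group.l_inv[OF AG_group] f by (simp add: AG_carrier)
  then have "(inv\<^bsub>AutoGroup G\<^esub> f \<otimes>\<^bsub>AutoGroup G\<^esub> f) x = x" using x by (simp add: AG_one)
  then show ?thesis using AG_mult_apply[OF AG_inv_auto[OF f] f x] by simp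
qed

lemma AG_inv_right: "f \<in> auto G \<Longrightarrow> x \<in> carrier G \<Longrightarrow> f ((inv\<^bsub>AutoGroup G\<^esub> f) x) = x"
proof -
  assume f: "f \<in> auto G" and x: "x \<in> carrier G"
  have "f \<otimes>\<^bsub>AutoGroup G\<^esub> inv\<^bsub>AutoGroup G\<^esub> f = \<one>\<^bsub>AutoGroup G\<^esub>"
    using group.r_inv[OF AG_group] f by (simp add: AG_carrier)
  then have "(f \<otimes>\<^bsub>AutoGroup G\<^esub> inv\<^bsub>AutoGroup G\<^esub> f) x = x" using x by (simp add: AG_one)
  then show ?thesis using AG_mult_apply[OF f AG_inv_auto[OF f] x] by simp
qed

lemma auto_group_hom: assumes "f \<in> auto G" shows "group_hom G G f"
  unfolding group_hom_def group_hom_axioms_def using assms is_group by (simp add: auto_def)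

lemma auto_mult: assumes "f \<in> auto G" "x \<in> carrier G" "y \<in> carrier G"
  shows "f (x \<otimes> y) = f x \<otimes> f y"
  using group_hom.hom_mult[OF auto_group_hom[OF assms(1)] assms(2,3)] .

lemma auto_inv: assumes "f \<in> auto G" "x \<in> carrier G" shows "f (inv x) = inv (f x)"
  using group_hom.hom_inv[OF auto_group_hom[OF assms(1)] assms(2)] .

lemma auto_one: assumes "f \<in> auto G" shows "f \<one> = \<one>"
  using group_hom.hom_one[OF auto_group_hom[OF assms(1)]] .

lemma auto_conj: "f \<in> auto G \<Longrightarrow> a \<in> carrier G \<Longrightarrow> h \<in> carrier G \<Longrightarrow>
   f (a \<otimes> h \<otimes> inv a) = f a \<otimes> f h \<otimes> inv (f a)"
proof -
  assume f: "f \<in> auto G" and a: "a \<in> carrier G" and h: "h \<in> carrier G"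
  have "f (a \<otimes> h \<otimes> inv a) = f (a \<otimes> h) \<otimes> f (inv a)" using auto_mult[OF f, of "a \<otimes> h" "inv a"] a h by simp
  also have "\<dots> = f a \<otimes> f h \<otimes> inv (f a)" using auto_mult[OF f a h] auto_inv[OF f a] by simp
  finally show ?thesis .
qed

lemma inv_cancel_l: "a \<in> carrier G \<Longrightarrow> h \<in> carrier G \<Longrightarrow> inv a \<otimes> (a \<otimes> h) = h"
  by (simp add: m_assoc[symmetric])

lemma inv_cancel_r: "a \<in> carrier G \<Longrightarrow> h \<in> carrier G \<Longrightarrow> a \<otimes> (inv a \<otimes> h) = h"
  by (simp add: m_assoc[symmetric])

lemma carried_auto: "whitehead_carried G \<H> A \<phi> \<Longrightarrow> \<phi> \<in> auto G"
  unfolding whitehead_carried_def Aut_eq[symmetric] by (elim bexE exE conjE)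

lemma carried_E:
  assumes "whitehead_carried G \<H> A \<phi>"
  obtains K x where "K \<in> \<H>" "x K = \<one>" "\<forall>H\<in>\<H>. x H \<in> K"
    "\<forall>P\<in>A (Fac K). \<forall>H1 H2. Fac H1 \<in> P \<longrightarrow> Fac H2 \<in> P \<longrightarrow> x H1 = x H2"
    "\<forall>P\<in>A (Fac K). Star \<in> P \<longrightarrow> (\<forall>H. Fac H \<in> P \<longrightarrow> x H = \<one>)"
    "\<phi> \<in> auto G" "\<forall>H\<in>\<H>. \<forall>h\<in>H. \<phi> h = x H \<otimes> h \<otimes> inv (x H)"
  using assms unfolding whitehead_carried_def Aut_eq by (elim bexE exE conjE) (rule that, assumption+)

lemma wp_auto: "\<rho> \<in> whitehead_products G \<H> A \<Longrightarrow> \<rho> \<in> auto G"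
proof (induction rule: whitehead_products.induct)
  case wp_id then show ?case by (rule id_in_auto)
next
  case (wp_step \<phi> \<rho>)
  have "\<phi> \<in> auto G" using wp_step(1) by (rule carried_auto)
  then show ?case using wp_step(3) monoid.m_closed[OF AG_monoid, of \<phi> \<rho>]
    by (simp add: AG_carrier AG_mult)
qed

lemma wp_step': "whitehead_carried G \<H> A \<phi> \<Longrightarrow> \<rho> \<in> whitehead_products G \<H> A \<Longrightarrow>
   \<phi> \<otimes>\<^bsub>AutoGroup G\<^esub> \<rho> \<in> whitehead_products G \<H> A"
proof -
  assume a: "whitehead_carried G \<H> A \<phi>" "\<rho> \<in> whitehead_products G \<H> A"
  have "\<phi> \<in> auto G" using a(1) by (rule carried_auto)
  then show ?thesis using a wp_auto[OF a(2)] by (simp add: AG_mult whitehead_products.wp_step)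
qed

lemma wp_one: "\<one>\<^bsub>AutoGroup G\<^esub> \<in> whitehead_products G \<H> A"
  by (simp add: AG_one whitehead_products.wp_id)

lemma wp_mult: "\<rho>1 \<in> whitehead_products G \<H> A \<Longrightarrow> \<rho>2 \<in> whitehead_products G \<H> A \<Longrightarrow>
   \<rho>1 \<otimes>\<^bsub>AutoGroup G\<^esub> \<rho>2 \<in> whitehead_products G \<H> A"
proof (induction rule: whitehead_products.induct)
  case wp_id
  have e: "(\<lambda>x\<in>carrier G. x) \<otimes>\<^bsub>AutoGroup G\<^esub> \<rho>2 = \<rho>2"
    using monoid.l_one[OF AG_monoid, of \<rho>2] wp_auto[OF wp_id] unfolding AG_one AG_carrier by blast
  from wp_id show ?case by (simp only: e)
next
  case (wp_step \<phi> \<rho>)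
  have ph: "\<phi> \<in> auto G" using wp_step(1) by (rule carried_auto)
  have r: "\<rho> \<in> auto G" by (rule wp_auto[OF wp_step(2)])
  have r2: "\<rho>2 \<in> auto G" by (rule wp_auto[OF wp_step(4)])
  have "compose (carrier G) \<phi> \<rho> \<otimes>\<^bsub>AutoGroup G\<^esub> \<rho>2 = \<phi> \<otimes>\<^bsub>AutoGroup G\<^esub> (\<rho> \<otimes>\<^bsub>AutoGroup G\<^esub> \<rho>2)"
    using monoid.m_assoc[OF AG_monoid, of \<phi> \<rho> \<rho>2] ph r r2 by (simp add: AG_carrier AG_mult)
  then show ?case using wp_step' wp_step by simp
qed

lemma carried_inv:
  assumes c: "whitehead_carried G \<H> A \<phi>" and sg: "\<forall>H\<in>\<H>. subgroup H G"
  shows "whitehead_carried G \<H> A (inv\<^bsub>AutoGroup G\<^esub> \<phi>)"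
proof -
  from c[unfolded whitehead_carried_def] obtain K where K: "K \<in> \<H>" and
    ex: "\<exists>x :: 'a set \<Rightarrow> 'a. x K = \<one> \<and> (\<forall>H\<in>\<H>. x H \<in> K) \<and>
        (\<forall>P\<in>A (Fac K). \<forall>H1 H2. Fac H1 \<in> P \<longrightarrow> Fac H2 \<in> P \<longrightarrow> x H1 = x H2) \<and>
        (\<forall>P\<in>A (Fac K). Star \<in> P \<longrightarrow> (\<forall>H. Fac H \<in> P \<longrightarrow> x H = \<one>)) \<and>
        \<phi> \<in> Aut G \<and>
        (\<forall>H\<in>\<H>. \<forall>h\<in>H. \<phi> h = x H \<otimes> h \<otimes> inv (x H))" ..
  from ex obtain x where
    rest: "x K = \<one> \<and> (\<forall>H\<in>\<H>. x H \<in> K) \<and>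
        (\<forall>P\<in>A (Fac K). \<forall>H1 H2. Fac H1 \<in> P \<longrightarrow> Fac H2 \<in> P \<longrightarrow> x H1 = x H2) \<and>
        (\<forall>P\<in>A (Fac K). Star \<in> P \<longrightarrow> (\<forall>H. Fac H \<in> P \<longrightarrow> x H = \<one>)) \<and>
        \<phi> \<in> Aut G \<and>
        (\<forall>H\<in>\<H>. \<forall>h\<in>H. \<phi> h = x H \<otimes> h \<otimes> inv (x H))" ..
  from rest have x1: "x K = \<one>" by (elim conjE)
  from rest have x2: "\<forall>H\<in>\<H>. x H \<in> K" by (elim conjE)
  from rest have x3: "\<forall>P\<in>A (Fac K). \<forall>H1 H2. Fac H1 \<in> P \<longrightarrow> Fac H2 \<in> P \<longrightarrow> x H1 = x H2" by (elim conjE)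
  from rest have x4: "\<forall>P\<in>A (Fac K). Star \<in> P \<longrightarrow> (\<forall>H. Fac H \<in> P \<longrightarrow> x H = \<one>)" by (elim conjE)
  from rest have ph: "\<phi> \<in> Aut G" by (elim conjE)
  from rest have x6: "\<forall>H\<in>\<H>. \<forall>h\<in>H. \<phi> h = x H \<otimes> h \<otimes> inv (x H)" by (elim conjE)
  have ph': "\<phi> \<in> auto G" using ph by (simp add: Aut_eq)
  have sK: "subgroup K G" using sg K by blast
  have xK: "\<And>H. H \<in> \<H> \<Longrightarrow> x H \<in> K" using x2 by blast
  have xc: "\<And>H. H \<in> \<H> \<Longrightarrow> x H \<in> carrier G" using xK subgroup.subset[OF sK] by blast
  have fixK: "\<phi> k = k" if k: "k \<in> K" for k
  proof -
    have "\<phi> k = x K \<otimes> k \<otimes> inv (x K)" using x6 K k by blast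
    moreover have "k \<in> carrier G" using k subgroup.subset[OF sK] by blast
    ultimately show ?thesis using x1 by simp
  qed
  show ?thesis unfolding whitehead_carried_def
  proof (intro bexI[OF _ K] exI[of _ "\<lambda>H. inv (x H)"] conjI ballI allI impI)
    show "inv x K = \<one>" using x1 by simp
    show "inv x H \<in> K" if "H \<in> \<H>" for H using xK[OF that] subgroup.m_inv_closed[OF sK] by blast
    show "inv x H1 = inv x H2" if "P \<in> A (Fac K)" "Fac H1 \<in> P" "Fac H2 \<in> P" for P H1 H2
    proof -
      have "x H1 = x H2" using x3 that by blast
      then show ?thesis by simp
    qed
    show "inv x H = \<one>" if "P \<in> A (Fac K)" "Star \<in> P" "Fac H \<in> P" for P H
    proof -
      have "x H = \<one>" using x4 that by blast
      then show ?thesis by simp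
    qed
    show "inv\<^bsub>AutoGroup G\<^esub> \<phi> \<in> Aut G" using AG_inv_auto[OF ph'] by (simp add: Aut_eq)
    fix H h assume H: "H \<in> \<H>" and h: "h \<in> H"
    have hc: "h \<in> carrier G" using h H sg subgroup.subset by blast
    have a: "x H \<in> carrier G" using xc H .
    define y where "y = inv (x H) \<otimes> h \<otimes> x H"
    have yc: "y \<in> carrier G" using a hc by (simp add: y_def)
    have fx: "\<phi> (x H) = x H" using fixK xK[OF H] by blast
    have fh: "\<phi> h = x H \<otimes> h \<otimes> inv (x H)" using x6 H h by blast
    have "\<phi> y = \<phi> (inv (x H) \<otimes> h) \<otimes> \<phi> (x H)"
      unfolding y_def using auto_mult[OF ph', of "inv (x H) \<otimes> h" "x H"] a hc by simp
    also have "\<dots> = \<phi> (inv (x H)) \<otimes> \<phi> h \<otimes> \<phi> (x H)"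
      using auto_mult[OF ph', of "inv (x H)" h] a hc by simp
    also have "\<dots> = inv (x H) \<otimes> (x H \<otimes> h \<otimes> inv (x H)) \<otimes> x H"
      using auto_inv[OF ph' a] fx fh by simp
    also have "\<dots> = h" using a hc by (simp add: m_assoc inv_cancel_l)
    finally have "\<phi> y = h" .
    then have "(inv\<^bsub>AutoGroup G\<^esub> \<phi>) h = y" using AG_inv_left[OF ph' yc] by simp
    then show "(inv\<^bsub>AutoGroup G\<^esub> \<phi>) h = inv x H \<otimes> h \<otimes> inv (inv x H)"
      using a by (simp add: y_def)
  qed
qed

lemma wp_inv:
  assumes "\<rho> \<in> whitehead_products G \<H> A" and sg: "\<forall>H\<in>\<H>. subgroup H G"
  shows "inv\<^bsub>AutoGroup G\<^esub> \<rho> \<in> whitehead_products G \<H> A"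
  using assms(1)
proof (induction rule: whitehead_products.induct)
  case wp_id
  have e: "inv\<^bsub>AutoGroup G\<^esub> (\<lambda>x\<in>carrier G. x) = (\<lambda>x\<in>carrier G. x)"
    using monoid.inv_one[OF AG_monoid] unfolding AG_one .
  show ?case unfolding e by (rule whitehead_products.wp_id)
next
  case (wp_step \<phi> \<rho>)
  have ph: "\<phi> \<in> auto G" using wp_step(1) by (rule carried_auto)
  have r: "\<rho> \<in> auto G" by (rule wp_auto[OF wp_step(2)])
  have "inv\<^bsub>AutoGroup G\<^esub> (compose (carrier G) \<phi> \<rho>) =
        inv\<^bsub>AutoGroup G\<^esub> \<rho> \<otimes>\<^bsub>AutoGroup G\<^esub> inv\<^bsub>AutoGroup G\<^esub> \<phi>"
    using group.inv_mult_group[OF AG_group, of \<phi> \<rho>] ph r by (simp add: AG_carrier AG_mult)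
  moreover have "inv\<^bsub>AutoGroup G\<^esub> \<phi> \<in> whitehead_products G \<H> A"
  proof -
    have "inv\<^bsub>AutoGroup G\<^esub> \<phi> \<otimes>\<^bsub>AutoGroup G\<^esub> \<one>\<^bsub>AutoGroup G\<^esub> \<in> whitehead_products G \<H> A"
      by (rule wp_step'[OF carried_inv[OF wp_step(1) sg] wp_one])
    then show ?thesis using monoid.r_one[OF AG_monoid] AG_inv_auto[OF ph] by (simp add: AG_carrier)
  qed
  ultimately show ?case using wp_mult wp_step(3) by simp
qed

end


definition good :: "('a, 'b) monoid_scheme \<Rightarrow> 'a marked \<Rightarrow> bool" where
  "good G p \<longleftrightarrow> (\<forall>H\<in>fst p. H \<subseteq> carrier G) \<and>
     (\<forall>l. snd p l \<noteq> {} \<longrightarrow> l \<in> basis_labels (fst p)) \<and>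
     (\<forall>l. \<forall>P\<in>snd p l. P \<subseteq> basis_labels (fst p))"

lemma mem_relabel: "x \<in> relabel_fam f A l' \<longleftrightarrow> (\<exists>l P. map_lbl f l = l' \<and> P \<in> A l \<and> x = map_lbl f ` P)"
  unfolding relabel_fam_def by blast

lemma image_compose: "H \<subseteq> C \<Longrightarrow> compose C f g ` H = f ` g ` H"
proof -
  assume H: "H \<subseteq> C"
  have "compose C f g ` H = (f \<circ> g) ` H"
    by (rule image_cong) (use H in \<open>auto simp: compose_def\<close>)
  then show ?thesis by (simp add: image_comp)
qed

lemma map_lbl_comp:
  assumes "l \<in> basis_labels \<H>" "\<forall>H\<in>\<H>. H \<subseteq> C"
  shows "map_lbl (compose C f g) l = map_lbl f (map_lbl g l)"
proof (cases l)
  case Star then show ?thesis by simp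
next
  case (Fac H)
  then have "H \<in> \<H>" using assms(1) by (auto simp: basis_labels_def)
  then show ?thesis using Fac assms(2) image_compose[of H C f g] by simp
qed

lemma map_lbl_id:
  assumes "l \<in> basis_labels \<H>" "\<forall>H\<in>\<H>. H \<subseteq> C"
  shows "map_lbl (\<lambda>x\<in>C. x) l = l"
proof (cases l)
  case Star then show ?thesis by simp
next
  case (Fac H)
  then have "H \<subseteq> C" using assms by (auto simp: basis_labels_def)
  then have "(\<lambda>x\<in>C. x) ` H = H" by auto
  then show ?thesis using Fac by simp
qed

lemma good_D1: "good G p \<Longrightarrow> H \<in> fst p \<Longrightarrow> H \<subseteq> carrier G" by (simp add: good_def)
lemma good_D2: "good G p \<Longrightarrow> P \<in> snd p l \<Longrightarrow> l \<in> basis_labels (fst p)"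
  unfolding good_def by blast
lemma good_D3: "good G p \<Longrightarrow> P \<in> snd p l \<Longrightarrow> P \<subseteq> basis_labels (fst p)"
  unfolding good_def by blast

lemma relabel_comp:
  assumes g: "good G p"
  shows "relabel_fam (compose (carrier G) f g) (snd p) = relabel_fam f (relabel_fam g (snd p))"
proof (intro ext Set.set_eqI)
  fix l' x
  have sub: "\<forall>H\<in>fst p. H \<subseteq> carrier G" using g by (simp add: good_def)
  have imP: "map_lbl (compose (carrier G) f g) ` P = map_lbl f ` map_lbl g ` P" if P: "P \<in> snd p l" for P l
  proof -
    have "map_lbl (compose (carrier G) f g) ` P = (map_lbl f \<circ> map_lbl g) ` P"
    proof (rule image_cong[OF refl])
      fix y assume "y \<in> P"
      then have "y \<in> basis_labels (fst p)" using good_D3[OF g P] by blast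
      then show "map_lbl (compose (carrier G) f g) y = (map_lbl f \<circ> map_lbl g) y"
        using map_lbl_comp[OF _ sub] by simp
    qed
    then show ?thesis by (simp add: image_comp)
  qed
  show "x \<in> relabel_fam (compose (carrier G) f g) (snd p) l' \<longleftrightarrow> x \<in> relabel_fam f (relabel_fam g (snd p)) l'"
  proof
    assume "x \<in> relabel_fam (compose (carrier G) f g) (snd p) l'"
    then obtain l P where a: "map_lbl (compose (carrier G) f g) l = l'" "P \<in> snd p l"
      "x = map_lbl (compose (carrier G) f g) ` P" unfolding mem_relabel by blast
    have "map_lbl f (map_lbl g l) = l'" using a(1) map_lbl_comp[OF good_D2[OF g a(2)] sub] by simp
    moreover have "map_lbl g ` P \<in> relabel_fam g (snd p) (map_lbl g l)"
      unfolding mem_relabel using a(2) by blast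
    moreover have "x = map_lbl f ` (map_lbl g ` P)" using a(3) imP[OF a(2)] by simp
    ultimately show "x \<in> relabel_fam f (relabel_fam g (snd p)) l'"
      unfolding mem_relabel[of x] by blast
  next
    assume "x \<in> relabel_fam f (relabel_fam g (snd p)) l'"
    then obtain m Q where a: "map_lbl f m = l'" "Q \<in> relabel_fam g (snd p) m" "x = map_lbl f ` Q"
      unfolding mem_relabel by blast
    from a(2) obtain l P where b: "map_lbl g l = m" "P \<in> snd p l" "Q = map_lbl g ` P"
      unfolding mem_relabel by blast
    have "map_lbl (compose (carrier G) f g) l = l'"
      using a(1) b(1) map_lbl_comp[OF good_D2[OF g b(2)] sub] by simp
    moreover have "x = map_lbl (compose (carrier G) f g) ` P" using a(3) b(3) imP[OF b(2)] by simp
    ultimately show "x \<in> relabel_fam (compose (carrier G) f g) (snd p) l'"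
      unfolding mem_relabel using b(2) by blast
  qed
qed

lemma act_comp:
  assumes g: "good G p"
  shows "act_marked (compose (carrier G) f g) p = act_marked f (act_marked g p)"
proof -
  have sub: "\<forall>H\<in>fst p. H \<subseteq> carrier G" using g by (simp add: good_def)
  have "(`) (compose (carrier G) f g) ` fst p = (`) f ` ((`) g ` fst p)"
  proof -
    have "(`) (compose (carrier G) f g) ` fst p = ((`) f \<circ> (`) g) ` fst p"
    proof (rule image_cong[OF refl])
      fix H assume "H \<in> fst p"
      then show "compose (carrier G) f g ` H = ((`) f \<circ> (`) g) H"
        using image_compose[of H "carrier G" f g] sub by simp
    qed
    then show ?thesis by (simp add: image_comp)
  qed
  then show ?thesis unfolding act_marked_def using relabel_comp[OF g] by simp
qed

lemma act_id:
  assumes g: "good G p"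
  shows "act_marked (\<lambda>x\<in>carrier G. x) p = p"
proof -
  have sub: "\<forall>H\<in>fst p. H \<subseteq> carrier G" using g by (simp add: good_def)
  have 1: "(`) (\<lambda>x\<in>carrier G. x) ` fst p = fst p"
  proof -
    have "(`) (\<lambda>x\<in>carrier G. x) ` fst p = id ` fst p"
      by (rule image_cong) (use sub in auto)
    then show ?thesis by simp
  qed
  have 2: "relabel_fam (\<lambda>x\<in>carrier G. x) (snd p) = snd p"
  proof (intro ext Set.set_eqI)
    fix l' x
    have imP: "map_lbl (\<lambda>x\<in>carrier G. x) ` P = P" if P: "P \<in> snd p l" for P l
    proof -
      have "map_lbl (\<lambda>x\<in>carrier G. x) ` P = id ` P"
      proof (rule image_cong[OF refl])
        fix y assume "y \<in> P"
        then have "y \<in> basis_labels (fst p)" using good_D3[OF g P] by blast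
        then show "map_lbl (\<lambda>x\<in>carrier G. x) y = id y"
          using map_lbl_id[OF _ sub] by simp
      qed
      then show ?thesis by simp
    qed
    show "x \<in> relabel_fam (\<lambda>x\<in>carrier G. x) (snd p) l' \<longleftrightarrow> x \<in> snd p l'"
    proof
      assume "x \<in> relabel_fam (\<lambda>x\<in>carrier G. x) (snd p) l'"
      then obtain l P where a: "map_lbl (\<lambda>x\<in>carrier G. x) l = l'" "P \<in> snd p l"
        "x = map_lbl (\<lambda>x\<in>carrier G. x) ` P" unfolding mem_relabel by blast
      have "l = l'" using a(1) map_lbl_id[OF good_D2[OF g a(2)] sub] by simp
      then show "x \<in> snd p l'" using a(2,3) imP[OF a(2)] by simp
    next
      assume a: "x \<in> snd p l'"
      have "map_lbl (\<lambda>x\<in>carrier G. x) l' = l'" using map_lbl_id[OF good_D2[OF g a] sub] .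
      moreover have "x = map_lbl (\<lambda>x\<in>carrier G. x) ` x" using imP[OF a] by simp
      ultimately show "x \<in> relabel_fam (\<lambda>x\<in>carrier G. x) (snd p) l'"
        unfolding mem_relabel using a by blast
    qed
  qed
  show ?thesis unfolding act_marked_def using 1 2 by simp
qed

lemma good_act:
  assumes g: "good G p" and f: "f \<in> carrier G \<rightarrow> carrier G"
  shows "good G (act_marked f p)"
proof -
  have sub: "\<forall>H\<in>fst p. H \<subseteq> carrier G" using g by (simp add: good_def)
  have lb: "map_lbl f l \<in> basis_labels ((`) f ` fst p)" if "l \<in> basis_labels (fst p)" for l
    using that by (cases l) (auto simp: basis_labels_def)
  have s1: "\<forall>H\<in>fst (act_marked f p). H \<subseteq> carrier G"
    using sub f by (auto simp: act_marked_def)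
  have s2: "l' \<in> basis_labels (fst (act_marked f p))" if "P' \<in> snd (act_marked f p) l'" for l' P'
  proof -
    have "P' \<in> relabel_fam f (snd p) l'" using that by (simp add: act_marked_def)
    then obtain l P where a: "map_lbl f l = l'" "P \<in> snd p l"
      unfolding mem_relabel by blast
    show ?thesis using lb[OF good_D2[OF g a(2)]] a(1) by (simp add: act_marked_def)
  qed
  have s3: "P' \<subseteq> basis_labels (fst (act_marked f p))" if "P' \<in> snd (act_marked f p) l'" for l' P'
  proof -
    have "P' \<in> relabel_fam f (snd p) l'" using that by (simp add: act_marked_def)
    then obtain l P where a: "P \<in> snd p l" "P' = map_lbl f ` P"
      unfolding mem_relabel by blast
    show ?thesis using lb good_D3[OF g a(1)] a(2) by (auto simp: act_marked_def)
  qed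
  show ?thesis unfolding good_def using s1 s2 s3 by blast
qed


lemma (in group) GI1: "a \<in> carrier G \<Longrightarrow> b \<in> carrier G \<Longrightarrow> t \<in> carrier G \<Longrightarrow>
  inv t \<otimes> (a \<otimes> b) \<otimes> t = (inv t \<otimes> a \<otimes> t) \<otimes> (inv t \<otimes> b \<otimes> t)"
  by (simp add: m_assoc inv_cancel_r)

lemma (in group) GI2: "a \<in> carrier G \<Longrightarrow> t \<in> carrier G \<Longrightarrow> t \<otimes> (inv t \<otimes> a \<otimes> t) = a \<otimes> t"
  by (simp add: m_assoc inv_cancel_r)

lemma (in group) GI3: "a \<in> carrier G \<Longrightarrow> t \<in> carrier G \<Longrightarrow>
  t \<otimes> (inv (inv a \<otimes> t) \<otimes> inv a \<otimes> (inv a \<otimes> t)) = inv a \<otimes> t"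
  by (simp add: m_assoc inv_cancel_r inv_mult_group)

lemma (in group) GI4: "t \<in> carrier G \<Longrightarrow> inv t \<otimes> \<one> \<otimes> t = \<one>"
  by simp

context group
begin

lemma AG_GI1: "a \<in> auto G \<Longrightarrow> b \<in> auto G \<Longrightarrow> t \<in> auto G \<Longrightarrow>
  inv\<^bsub>AutoGroup G\<^esub> t \<otimes>\<^bsub>AutoGroup G\<^esub> (a \<otimes>\<^bsub>AutoGroup G\<^esub> b) \<otimes>\<^bsub>AutoGroup G\<^esub> t =
  (inv\<^bsub>AutoGroup G\<^esub> t \<otimes>\<^bsub>AutoGroup G\<^esub> a \<otimes>\<^bsub>AutoGroup G\<^esub> t) \<otimes>\<^bsub>AutoGroup G\<^esub>
  (inv\<^bsub>AutoGroup G\<^esub> t \<otimes>\<^bsub>AutoGroup G\<^esub> b \<otimes>\<^bsub>AutoGroup G\<^esub> t)"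
  using group.GI1[OF AG_group] by (simp add: AG_carrier)

lemma AG_GI2: "a \<in> auto G \<Longrightarrow> t \<in> auto G \<Longrightarrow>
  t \<otimes>\<^bsub>AutoGroup G\<^esub> (inv\<^bsub>AutoGroup G\<^esub> t \<otimes>\<^bsub>AutoGroup G\<^esub> a \<otimes>\<^bsub>AutoGroup G\<^esub> t) = a \<otimes>\<^bsub>AutoGroup G\<^esub> t"
  using group.GI2[OF AG_group] by (simp add: AG_carrier)

lemma AG_GI3: "a \<in> auto G \<Longrightarrow> t \<in> auto G \<Longrightarrow>
  t \<otimes>\<^bsub>AutoGroup G\<^esub> (inv\<^bsub>AutoGroup G\<^esub> (inv\<^bsub>AutoGroup G\<^esub> a \<otimes>\<^bsub>AutoGroup G\<^esub> t) \<otimes>\<^bsub>AutoGroup G\<^esub> inv\<^bsub>AutoGroup G\<^esub> a \<otimes>\<^bsub>AutoGroup G\<^esub> (inv\<^bsub>AutoGroup G\<^esub> a \<otimes>\<^bsub>AutoGroup G\<^esub> t))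
   = inv\<^bsub>AutoGroup G\<^esub> a \<otimes>\<^bsub>AutoGroup G\<^esub> t"
  using group.GI3[OF AG_group] by (simp add: AG_carrier)

lemma AG_GI4: "t \<in> auto G \<Longrightarrow>
  inv\<^bsub>AutoGroup G\<^esub> t \<otimes>\<^bsub>AutoGroup G\<^esub> (\<lambda>x\<in>carrier G. x) \<otimes>\<^bsub>AutoGroup G\<^esub> t = (\<lambda>x\<in>carrier G. x)"
  using group.GI4[OF AG_group] by (simp add: AG_carrier AG_one)

lemma AG_mult_auto: "a \<in> auto G \<Longrightarrow> b \<in> auto G \<Longrightarrow> a \<otimes>\<^bsub>AutoGroup G\<^esub> b \<in> auto G"
  using monoid.m_closed[OF AG_monoid] by (simp add: AG_carrier)


lemma conj_carried:
  assumes th: "\<theta> \<in> auto G" and sub: "\<forall>H\<in>\<H>. H \<subseteq> carrier G"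
    and c: "whitehead_carried G ((`) \<theta> ` \<H>) (relabel_fam \<theta> A) \<phi>"
  shows "whitehead_carried G \<H> A (inv\<^bsub>AutoGroup G\<^esub> \<theta> \<otimes>\<^bsub>AutoGroup G\<^esub> \<phi> \<otimes>\<^bsub>AutoGroup G\<^esub> \<theta>)"
proof -
  let ?ti = "inv\<^bsub>AutoGroup G\<^esub> \<theta>"
  have ti: "?ti \<in> auto G" by (rule AG_inv_auto[OF th])
  obtain K' x' where K': "K' \<in> (`) \<theta> ` \<H>" and x1: "x' K' = \<one>" and x2: "\<forall>H\<in>(`) \<theta> ` \<H>. x' H \<in> K'"
    and x3: "\<forall>P\<in>relabel_fam \<theta> A (Fac K'). \<forall>H1 H2. Fac H1 \<in> P \<longrightarrow> Fac H2 \<in> P \<longrightarrow> x' H1 = x' H2"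
    and x4: "\<forall>P\<in>relabel_fam \<theta> A (Fac K'). Star \<in> P \<longrightarrow> (\<forall>H. Fac H \<in> P \<longrightarrow> x' H = \<one>)"
    and ph: "\<phi> \<in> auto G" and x6: "\<forall>H\<in>(`) \<theta> ` \<H>. \<forall>h\<in>H. \<phi> h = x' H \<otimes> h \<otimes> inv (x' H)"
    by (rule carried_E[OF c])
  from K' obtain K where K: "K \<in> \<H>" and KK: "K' = \<theta> ` K" by blast
  have Kc: "K \<subseteq> carrier G" using sub K by blast
  define x where "x H = ?ti (x' (\<theta> ` H))" for H
  have P': "map_lbl \<theta> ` P \<in> relabel_fam \<theta> A (Fac K')" if "P \<in> A (Fac K)" for P
  proof -
    have "map_lbl \<theta> (Fac K) = Fac K'" using KK by simp
    then show ?thesis unfolding mem_relabel using that by blast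
  qed
  show ?thesis unfolding whitehead_carried_def Aut_eq
  proof (intro bexI[OF _ K] exI[of _ x] conjI ballI allI impI)
    show "x K = \<one>" unfolding x_def using x1 KK auto_one[OF ti] by simp
    show "x H \<in> K" if H: "H \<in> \<H>" for H
    proof -
      have "x' (\<theta> ` H) \<in> K'" using x2 H by blast
      then have "x' (\<theta> ` H) \<in> \<theta> ` K" using KK by simp
      then obtain k where k: "k \<in> K" "x' (\<theta> ` H) = \<theta> k" by blast
      have "x H = k" unfolding x_def using k AG_inv_left[OF th] Kc by auto
      then show ?thesis using k by simp
    qed
    show "x H1 = x H2" if "P \<in> A (Fac K)" "Fac H1 \<in> P" "Fac H2 \<in> P" for P H1 H2
    proof -
      have a: "Fac (\<theta> ` H1) \<in> map_lbl \<theta> ` P" using imageI[OF that(2), of "map_lbl \<theta>"] by simp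
      have b: "Fac (\<theta> ` H2) \<in> map_lbl \<theta> ` P" using imageI[OF that(3), of "map_lbl \<theta>"] by simp
      have "x' (\<theta> ` H1) = x' (\<theta> ` H2)" using x3[rule_format, OF P'[OF that(1)] a b] .
      then show ?thesis unfolding x_def by simp
    qed
    show "x H = \<one>" if "P \<in> A (Fac K)" "Star \<in> P" "Fac H \<in> P" for P H
    proof -
      have a: "Fac (\<theta> ` H) \<in> map_lbl \<theta> ` P" using imageI[OF that(3), of "map_lbl \<theta>"] by simp
      have b: "Star \<in> map_lbl \<theta> ` P" using imageI[OF that(2), of "map_lbl \<theta>"] by simp
      have "x' (\<theta> ` H) = \<one>" using x4[rule_format, OF P'[OF that(1)] b a] .
      then show ?thesis unfolding x_def using auto_one[OF ti] by simp
    qed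
    show "?ti \<otimes>\<^bsub>AutoGroup G\<^esub> \<phi> \<otimes>\<^bsub>AutoGroup G\<^esub> \<theta> \<in> auto G"
      using AG_mult_auto[OF AG_mult_auto[OF ti ph] th] .
    fix H h assume H: "H \<in> \<H>" and h: "h \<in> H"
    have hc: "h \<in> carrier G" using bspec[OF sub H] h by blast
    have thc: "\<theta> h \<in> carrier G" using auto_in[OF th hc] .
    have H': "\<theta> ` H \<in> (`) \<theta> ` \<H>" using H by blast
    have xc: "x' (\<theta> ` H) \<in> carrier G"
    proof -
      have "x' (\<theta> ` H) \<in> K'" using x2 H' by blast
      then have "x' (\<theta> ` H) \<in> \<theta> ` K" using KK by simp
      then obtain k where "k \<in> K" "x' (\<theta> ` H) = \<theta> k" by blast
      then show ?thesis using Kc auto_in[OF th, of k] by auto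
    qed
    have e1: "\<phi> (\<theta> h) = x' (\<theta> ` H) \<otimes> \<theta> h \<otimes> inv (x' (\<theta> ` H))"
      using x6 H' h by blast
    have "(?ti \<otimes>\<^bsub>AutoGroup G\<^esub> \<phi> \<otimes>\<^bsub>AutoGroup G\<^esub> \<theta>) h = ?ti (\<phi> (\<theta> h))"
      using AG_mult_apply[OF AG_mult_auto[OF ti ph] th hc] AG_mult_apply[OF ti ph thc] by simp
    also have "\<dots> = ?ti (x' (\<theta> ` H)) \<otimes> ?ti (\<theta> h) \<otimes> inv (?ti (x' (\<theta> ` H)))"
      using e1 auto_conj[OF ti xc thc] by simp
    also have "\<dots> = x H \<otimes> h \<otimes> inv (x H)"
      unfolding x_def using AG_inv_left[OF th hc] by simp
    finally show "(?ti \<otimes>\<^bsub>AutoGroup G\<^esub> \<phi> \<otimes>\<^bsub>AutoGroup G\<^esub> \<theta>) h = x H \<otimes> h \<otimes> inv (x H)" .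
  qed
qed

lemma wp_conj:
  assumes th: "\<theta> \<in> auto G" and sub: "\<forall>H\<in>\<H>. H \<subseteq> carrier G"
    and r: "\<rho> \<in> whitehead_products G ((`) \<theta> ` \<H>) (relabel_fam \<theta> A)"
  shows "inv\<^bsub>AutoGroup G\<^esub> \<theta> \<otimes>\<^bsub>AutoGroup G\<^esub> \<rho> \<otimes>\<^bsub>AutoGroup G\<^esub> \<theta> \<in> whitehead_products G \<H> A"
  using r
proof (induction rule: whitehead_products.induct)
  case wp_id
  show ?case unfolding AG_GI4[OF th] by (rule whitehead_products.wp_id)
next
  case (wp_step \<phi> \<rho>)
  have ph: "\<phi> \<in> auto G" by (rule carried_auto[OF wp_step(1)])
  have r: "\<rho> \<in> auto G" by (rule wp_auto[OF wp_step(2)])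
  have "compose (carrier G) \<phi> \<rho> = \<phi> \<otimes>\<^bsub>AutoGroup G\<^esub> \<rho>" using AG_mult[OF ph r] by simp
  then show ?case using AG_GI1[OF ph r th] wp_step' conj_carried[OF th sub wp_step(1)] wp_step(3) by simp
qed

lemma marked_props:
  assumes "marked_tree G n Gf p"
  shows "good G p \<and> (\<forall>H\<in>fst p. subgroup H G)"
proof -
  from assms have b: "is_basis G n Gf (fst p)" and t: "tree_family (basis_labels (fst p)) (snd p)"
    by (auto simp: marked_tree_def)
  from b[unfolded is_basis_def] obtain Hf where Hf0: "fst p = Hf ` {..<n} \<and>
      (\<forall>i<n. \<exists>g\<in>carrier G. Hf i = conj_set G g (Gf i)) \<and> is_free_product G Hf {..<n}" ..
  from Hf0 have Hf1: "fst p = Hf ` {..<n}" by (elim conjE)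
  from Hf0 have Hf2: "is_free_product G Hf {..<n}" by (elim conjE)
  from Hf2 have "\<forall>i\<in>{..<n}. subgroup (Hf i) G" unfolding is_free_product_def by (elim conjE)
  then have sg: "\<forall>H\<in>fst p. subgroup H G" unfolding Hf1 by blast
  from t[unfolded tree_family_def] obtain V where
     "\<exists>E lab. pointed_labelled_tree (basis_labels (fst p)) V E lab \<and> snd p = petal_family V E lab" ..
  then obtain E where "\<exists>lab. pointed_labelled_tree (basis_labels (fst p)) V E lab \<and> snd p = petal_family V E lab" ..
  then obtain lab where TA: "pointed_labelled_tree (basis_labels (fst p)) V E lab \<and> snd p = petal_family V E lab" ..
  from TA have T: "pointed_labelled_tree (basis_labels (fst p)) V E lab" by (elim conjE)
  from TA have A: "snd p = petal_family V E lab" by (elim conjE)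
  have labin: "\<And>u l. u \<in> V \<Longrightarrow> lab u = Some l \<Longrightarrow> l \<in> basis_labels (fst p)"
  proof -
    have "\<forall>u\<in>V. \<forall>l. lab u = Some l \<longrightarrow> l \<in> basis_labels (fst p)"
      using T unfolding pointed_labelled_tree_def by (elim conjE)
    then show "\<And>u l. u \<in> V \<Longrightarrow> lab u = Some l \<Longrightarrow> l \<in> basis_labels (fst p)" by blast
  qed
  have g2: "l \<in> basis_labels (fst p) \<and> P \<subseteq> basis_labels (fst p)" if "P \<in> snd p l" for l P
  proof -
    from that obtain u v where uv: "P = labels_of lab (component_minus V E u v)" "u \<in> V"
      "lab u = Some l" "v \<in> V - {u}"
      unfolding A petal_family_def by blast
    have "P \<subseteq> basis_labels (fst p)"
    proof
      fix l' assume "l' \<in> P"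
      then obtain w where w: "w \<in> component_minus V E u v" "lab w = Some l'"
        unfolding uv labels_of_def by blast
      have "w = v \<or> w \<in> V - {u}" using adj_rtr_end w(1) unfolding component_minus_def by blast
      then have "w \<in> V" using uv by blast
      then show "l' \<in> basis_labels (fst p)" using labin w(2) by blast
    qed
    then show ?thesis using labin uv by blast
  qed
  have "good G p" unfolding good_def using g2 sg subgroup.subset by blast
  then show ?thesis using sg by blast
qed

lemma class_orbit:
  assumes q: "marked_tree G n Gf q" and r: "(q, r) \<in> ident G n Gf"
  shows "\<exists>\<psi>\<in>whitehead_products G (fst q) (snd q). r = act_marked \<psi> q"
  using r unfolding ident_def
proof (induction rule: rtrancl_induct)
  case base
  have "act_marked (\<lambda>x\<in>carrier G. x) q = q" using act_id marked_props[OF q] by blast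
  then show ?case using whitehead_products.wp_id by metis
next
  case (step r r')
  from step.IH obtain \<psi> where psi: "\<psi> \<in> whitehead_products G (fst q) (snd q)" and
    rq: "r = act_marked \<psi> q" by blast
  have gq: "good G q" and sq: "\<forall>H\<in>fst q. H \<subseteq> carrier G"
    using marked_props[OF q] subgroup.subset by blast+
  have ps: "\<psi> \<in> auto G" by (rule wp_auto[OF psi])
  from step.hyps(2) consider "(r, r') \<in> ident_step G n Gf" | "(r', r) \<in> ident_step G n Gf" by blast
  then show ?case
  proof cases
    case 1
    then obtain \<rho> where m: "marked_tree G n Gf r" and r': "r' = act_marked \<rho> r"
      and rho: "\<rho> \<in> whitehead_products G (fst r) (snd r)"
      unfolding ident_step_def by blast
    have rho': "\<rho> \<in> whitehead_products G ((`) \<psi> ` fst q) (relabel_fam \<psi> (snd q))"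
      using rho rq by (simp add: act_marked_def)
    have rh: "\<rho> \<in> auto G" by (rule wp_auto[OF rho])
    have c: "inv\<^bsub>AutoGroup G\<^esub> \<psi> \<otimes>\<^bsub>AutoGroup G\<^esub> \<rho> \<otimes>\<^bsub>AutoGroup G\<^esub> \<psi> \<in> whitehead_products G (fst q) (snd q)"
      by (rule wp_conj[OF ps sq rho'])
    have "\<rho> \<otimes>\<^bsub>AutoGroup G\<^esub> \<psi> \<in> whitehead_products G (fst q) (snd q)"
      using wp_mult[OF psi c] AG_GI2[OF rh ps] by simp
    moreover have "r' = act_marked (\<rho> \<otimes>\<^bsub>AutoGroup G\<^esub> \<psi>) q"
      using r' rq act_comp[OF gq, of \<rho> \<psi>] AG_mult[OF rh ps] by simp
    ultimately show ?thesis by blast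
  next
    case 2
    then obtain \<rho> where m: "marked_tree G n Gf r'" and r': "r = act_marked \<rho> r'"
      and rho: "\<rho> \<in> whitehead_products G (fst r') (snd r')"
      unfolding ident_step_def by blast
    have gr: "good G r'" and sr: "\<forall>H\<in>fst r'. subgroup H G" using marked_props[OF m] by blast+
    have rh: "\<rho> \<in> auto G" by (rule wp_auto[OF rho])
    let ?ri = "inv\<^bsub>AutoGroup G\<^esub> \<rho>"
    have ri: "?ri \<in> auto G" by (rule AG_inv_auto[OF rh])
    have riW: "?ri \<in> whitehead_products G (fst r') (snd r')" by (rule wp_inv[OF rho sr])
    define \<theta> where "\<theta> = ?ri \<otimes>\<^bsub>AutoGroup G\<^esub> \<psi>"
    have th: "\<theta> \<in> auto G" unfolding \<theta>_def by (rule AG_mult_auto[OF ri ps])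
    have "act_marked \<theta> q = act_marked ?ri r"
      unfolding \<theta>_def rq using act_comp[OF gq, of ?ri \<psi>] AG_mult[OF ri ps] by simp
    also have "\<dots> = act_marked (?ri \<otimes>\<^bsub>AutoGroup G\<^esub> \<rho>) r'"
      unfolding r' using act_comp[OF gr, of ?ri \<rho>] AG_mult[OF ri rh] by simp
    also have "\<dots> = r'"
    proof -
      have "?ri \<otimes>\<^bsub>AutoGroup G\<^esub> \<rho> = (\<lambda>x\<in>carrier G. x)"
        using group.l_inv[OF AG_group] rh by (simp add: AG_carrier AG_one)
      then show ?thesis using act_id[OF gr] by simp
    qed
    finally have eq: "act_marked \<theta> q = r'" .
    have riW': "?ri \<in> whitehead_products G ((`) \<theta> ` fst q) (relabel_fam \<theta> (snd q))"
      using riW eq[symmetric] by (simp add: act_marked_def)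
    have c: "inv\<^bsub>AutoGroup G\<^esub> \<theta> \<otimes>\<^bsub>AutoGroup G\<^esub> ?ri \<otimes>\<^bsub>AutoGroup G\<^esub> \<theta> \<in> whitehead_products G (fst q) (snd q)"
      by (rule wp_conj[OF th sq riW'])
    have "\<theta> \<in> whitehead_products G (fst q) (snd q)"
      using wp_mult[OF psi c] AG_GI3[OF rh ps] unfolding \<theta>_def by simp
    then show ?thesis using eq by metis
  qed
qed

end


lemma exists_sorted:
  assumes "finite S" "S \<subseteq> T"
    and tot: "\<forall>x\<in>T. \<forall>y\<in>T. x \<noteq> y \<longrightarrow> R x y \<or> R y x"
    and tr: "\<forall>x\<in>T. \<forall>y\<in>T. \<forall>z\<in>T. R x y \<longrightarrow> R y z \<longrightarrow> R x z"
    and irr: "\<forall>x. \<not> R x x"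
  shows "\<exists>L. set L = S \<and> sorted_wrt R L \<and> distinct L"
  using assms(1,2)
proof (induction S rule: finite_induct)
  case empty then show ?case by simp
next
  case (insert x F)
  then obtain L where L: "set L = F" "sorted_wrt R L" "distinct L" by blast
  have xT: "x \<in> T" using insert by blast
  have FT: "F \<subseteq> T" using insert by blast
  define L' where "L' = filter (\<lambda>y. R y x) L @ x # filter (\<lambda>y. R x y) L"
  have "set L' = insert x F"
  proof -
    have "R y x \<or> R x y" if yF: "y \<in> F" for y
    proof -
      have "y \<in> T" "y \<noteq> x" using yF FT insert(2) by auto
      then show ?thesis using tot[rule_format, of y x] xT by blast
    qed
    then show ?thesis unfolding L'_def using L(1) by auto
  qed
  moreover have "sorted_wrt R L'"
  proof -
    have a: "sorted_wrt R (filter (\<lambda>y. R y x) L)" using L(2) by (simp add: sorted_wrt_filter)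
    have b: "sorted_wrt R (filter (\<lambda>y. R x y) L)" using L(2) by (simp add: sorted_wrt_filter)
    have c: "R y z" if "y \<in> set (filter (\<lambda>y. R y x) L)" "z \<in> set (x # filter (\<lambda>y. R x y) L)" for y z
    proof -
      have y: "y \<in> T" "R y x" using that(1) L(1) FT by auto
      show ?thesis
      proof (cases "z = x")
        case True then show ?thesis using y by simp
      next
        case False
        then have "z \<in> T" "R x z" using that(2) L(1) FT by auto
        then show ?thesis using tr[rule_format, of y x z] y xT by blast
      qed
    qed
    have d: "\<forall>y\<in>set (filter (\<lambda>y. R x y) L). R x y" by simp
    have e: "sorted_wrt R (x # filter (\<lambda>y. R x y) L)" unfolding sorted_wrt.simps(2) using b d by (rule conjI[rotated])
    show ?thesis unfolding L'_def sorted_wrt_append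
    proof (intro conjI ballI)
      show "sorted_wrt R (filter (\<lambda>y. R y x) L)" by (rule a)
      show "sorted_wrt R (x # filter (\<lambda>y. R x y) L)" by (rule e)
      fix y z assume "y \<in> set (filter (\<lambda>y. R y x) L)" "z \<in> set (x # filter (\<lambda>y. R x y) L)"
      then show "R y z" by (rule c)
    qed
  qed
  moreover have "distinct L'"
  proof -
    have nb: "\<not> (R y x \<and> R x y)" if "y \<in> F" for y
    proof
      assume "R y x \<and> R x y"
      moreover have "y \<in> T" using that FT by blast
      ultimately have "R y y" using tr[rule_format, of y x y] xT by blast
      then show False using irr by blast
    qed
    have d1: "distinct (filter (\<lambda>y. R y x) L)" using L(3) by simp
    have d2: "distinct (x # filter (\<lambda>y. R x y) L)" using L(1,3) insert(2) by simp
    have d3: "set (filter (\<lambda>y. R y x) L) \<inter> set (x # filter (\<lambda>y. R x y) L) = {}"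
      using nb L(1) insert(2) by auto
    show ?thesis unfolding L'_def distinct_append using d1 d2 d3 by blast
  qed
  ultimately show ?case by blast
qed

locale tree_ctx = group +
  fixes HH :: "'a set set" and V :: "nat set" and E :: "nat set set" and lab :: "nat \<Rightarrow> 'a lbl option"
  assumes plt: "pointed_labelled_tree (basis_labels HH) V E lab"
    and sg: "\<forall>H\<in>HH. subgroup H G"
    and finHH: "finite HH" and finH: "\<forall>H\<in>HH. finite H"
begin

definition vtx :: "'a lbl \<Rightarrow> nat" where "vtx l = (THE u. u \<in> V \<and> lab u = Some l)"

lemma conn: "u \<in> V \<Longrightarrow> v \<in> V \<Longrightarrow> (u, v) \<in> (adj_rel V E)\<^sup>*"
proof -
  assume "u \<in> V" "v \<in> V"
  moreover have "is_tree V E" using plt unfolding pointed_labelled_tree_def by (elim conjE)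
  ultimately show ?thesis unfolding is_tree_def by blast
qed

lemma uniq: "l \<in> basis_labels HH \<Longrightarrow> \<exists>!u. u \<in> V \<and> lab u = Some l"
proof -
  have "\<forall>l\<in>basis_labels HH. \<exists>!u. u \<in> V \<and> lab u = Some l"
    using plt unfolding pointed_labelled_tree_def by (elim conjE)
  then show "l \<in> basis_labels HH \<Longrightarrow> \<exists>!u. u \<in> V \<and> lab u = Some l" by blast
qed

lemma vtx: "l \<in> basis_labels HH \<Longrightarrow> vtx l \<in> V \<and> lab (vtx l) = Some l"
  unfolding vtx_def using theI'[OF uniq] by blast

lemma vtx_ne: "l1 \<in> basis_labels HH \<Longrightarrow> l2 \<in> basis_labels HH \<Longrightarrow> l1 \<noteq> l2 \<Longrightarrow> vtx l1 \<noteq> vtx l2"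
  using vtx by (metis option.inject)

lemma Star_in: "Star \<in> basis_labels HH" by (simp add: basis_labels_def)
lemma Fac_in: "H \<in> HH \<Longrightarrow> Fac H \<in> basis_labels HH" by (simp add: basis_labels_def)

abbreviation "sv \<equiv> vtx Star"
abbreviation "vf H \<equiv> vtx (Fac H)"
abbreviation "RR W \<equiv> (adj_rel W E)\<^sup>*"

lemma sv_V: "sv \<in> V" using vtx Star_in by blast
lemma vf_V: "H \<in> HH \<Longrightarrow> vf H \<in> V" using vtx Fac_in by blast
lemma sv_vf: "H \<in> HH \<Longrightarrow> sv \<noteq> vf H" using vtx_ne Star_in Fac_in by blast
lemma vf_vf: "H \<in> HH \<Longrightarrow> K \<in> HH \<Longrightarrow> H \<noteq> K \<Longrightarrow> vf H \<noteq> vf K" using vtx_ne Fac_in by blast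

lemma petal_mem:
  assumes K: "K \<in> HH" and v: "v \<in> V" "v \<noteq> vf K"
  shows "labels_of lab (component_minus V E (vf K) v) \<in> petal_family V E lab (Fac K)"
proof -
  have "vf K \<in> V" "lab (vf K) = Some (Fac K)" using vtx Fac_in[OF K] by blast+
  then show ?thesis unfolding petal_family_def using v by blast
qed

lemma in_labels: "w \<in> component_minus V E u v \<Longrightarrow> lab w = Some l \<Longrightarrow> l \<in> labels_of lab (component_minus V E u v)"
  unfolding labels_of_def by blast

lemma comp_iff: "w \<in> component_minus V E u v \<longleftrightarrow> (v, w) \<in> RR (V - {u})"
  unfolding component_minus_def by simp

lemma carried_E2:
  assumes "whitehead_carried G HH (petal_family V E lab) \<phi>"
  obtains K x where "K \<in> HH" "x K = \<one>" "\<forall>H\<in>HH. x H \<in> K"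
    "\<forall>H1\<in>HH. \<forall>H2\<in>HH. H1 \<noteq> K \<longrightarrow> (vf H1, vf H2) \<in> RR (V - {vf K}) \<longrightarrow> x H1 = x H2"
    "\<forall>H\<in>HH. (sv, vf H) \<in> RR (V - {vf K}) \<longrightarrow> x H = \<one>"
    "\<phi> \<in> auto G" "\<forall>H\<in>HH. \<forall>h\<in>H. \<phi> h = x H \<otimes> h \<otimes> inv (x H)"
proof -
  obtain K x where K: "K \<in> HH" and x1: "x K = \<one>" and x2: "\<forall>H\<in>HH. x H \<in> K"
    and x3: "\<forall>P\<in>petal_family V E lab (Fac K). \<forall>H1 H2. Fac H1 \<in> P \<longrightarrow> Fac H2 \<in> P \<longrightarrow> x H1 = x H2"
    and x4: "\<forall>P\<in>petal_family V E lab (Fac K). Star \<in> P \<longrightarrow> (\<forall>H. Fac H \<in> P \<longrightarrow> x H = \<one>)"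
    and ph: "\<phi> \<in> auto G" and x6: "\<forall>H\<in>HH. \<forall>h\<in>H. \<phi> h = x H \<otimes> h \<otimes> inv (x H)"
    by (rule carried_E[OF assms])
  have c1: "x H1 = x H2" if H: "H1 \<in> HH" "H2 \<in> HH" "H1 \<noteq> K" "(vf H1, vf H2) \<in> RR (V - {vf K})" for H1 H2
  proof -
    let ?P = "labels_of lab (component_minus V E (vf K) (vf H1))"
    have P: "?P \<in> petal_family V E lab (Fac K)"
      using petal_mem[OF K vf_V[OF H(1)] vf_vf[OF H(1) K H(3)]] .
    have a: "Fac H1 \<in> ?P" using in_labels[of "vf H1" "vf K" "vf H1"] vtx Fac_in[OF H(1)]
      by (simp add: comp_iff)
    have b: "Fac H2 \<in> ?P" using in_labels[of "vf H2" "vf K" "vf H1"] vtx Fac_in[OF H(2)] H(4)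
      by (simp add: comp_iff)
    show ?thesis using x3[rule_format, OF P a b] .
  qed
  have c2: "x H = \<one>" if H: "H \<in> HH" "(sv, vf H) \<in> RR (V - {vf K})" for H
  proof -
    let ?P = "labels_of lab (component_minus V E (vf K) sv)"
    have P: "?P \<in> petal_family V E lab (Fac K)"
      using petal_mem[OF K sv_V sv_vf[OF K]] .
    have a: "Star \<in> ?P" using in_labels[of sv "vf K" sv] vtx Star_in
      by (simp add: comp_iff)
    have b: "Fac H \<in> ?P" using in_labels[of "vf H" "vf K" sv] vtx Fac_in[OF H(1)] H(2)
      by (simp add: comp_iff)
    show ?thesis using x4[rule_format, OF P a b] .
  qed
  have c1': "\<forall>H1\<in>HH. \<forall>H2\<in>HH. H1 \<noteq> K \<longrightarrow> (vf H1, vf H2) \<in> RR (V - {vf K}) \<longrightarrow> x H1 = x H2"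
    using c1 by blast
  have c2': "\<forall>H\<in>HH. (sv, vf H) \<in> RR (V - {vf K}) \<longrightarrow> x H = \<one>" using c2 by blast
  show ?thesis by (rule that[OF K x1 x2 c1' c2' ph x6])
qed

definition CH :: "'a set \<Rightarrow> 'a set set" where
  "CH H = {K \<in> HH. K \<noteq> H \<and> (sv, vf H) \<notin> RR (V - {vf K})}"

definition prec :: "'a set \<Rightarrow> 'a set \<Rightarrow> bool" where
  "prec K L \<longleftrightarrow> K \<noteq> L \<and> (sv, vf L) \<notin> RR (V - {vf K})"

lemma T_antisym:
  assumes "K \<in> HH" "L \<in> HH" "K \<noteq> L"
  shows "(sv, vf L) \<in> RR (V - {vf K}) \<or> (sv, vf K) \<in> RR (V - {vf L})"
  using tree_antisym[OF conn[OF sv_V vf_V[OF assms(1)]] sv_vf[OF assms(1)] sv_vf[OF assms(2)]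
      vf_vf[OF assms]] .

lemma T_total:
  assumes H: "H \<in> HH" and K: "K \<in> CH H" and L: "L \<in> CH H" and "K \<noteq> L"
  shows "prec K L \<or> prec L K"
proof (rule ccontr)
  assume "\<not> (prec K L \<or> prec L K)"
  then have a: "(sv, vf L) \<in> RR (V - {vf K})" and b: "(sv, vf K) \<in> RR (V - {vf L})"
    using assms(4) unfolding prec_def by auto
  have KH: "K \<in> HH" "K \<noteq> H" "(sv, vf H) \<notin> RR (V - {vf K})" using K unfolding CH_def by auto
  have LH: "L \<in> HH" "L \<noteq> H" "(sv, vf H) \<notin> RR (V - {vf L})" using L unfolding CH_def by auto
  have "(sv, vf H) \<in> RR (V - {vf K}) \<or> (sv, vf H) \<in> RR (V - {vf L})"
    by (rule tree_total[OF conn[OF vf_V[OF H] vf_V[OF KH(1)]] vf_vf[OF H KH(1)] vf_vf[OF H LH(1)]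
          vf_vf[OF KH(1) LH(1) assms(4)] vf_V[OF KH(1)] a b])
      (use KH LH in auto)
  then show False using KH LH by blast
qed

lemma T_prec_antisym: "K \<in> HH \<Longrightarrow> L \<in> HH \<Longrightarrow> prec K L \<Longrightarrow> \<not> prec L K"
  using T_antisym unfolding prec_def by blast

lemma T_trans:
  assumes "K1 \<in> HH" "K2 \<in> HH" "K3 \<in> HH" "prec K1 K2" "prec K2 K3"
  shows "prec K1 K3"
proof -
  have ne: "K1 \<noteq> K3" using T_prec_antisym assms by blast
  have "(sv, vf K3) \<notin> RR (V - {vf K1})"
  proof
    assume a: "(sv, vf K3) \<in> RR (V - {vf K1})"
    have b: "(sv, vf K3) \<notin> RR (V - {vf K2})" using assms(5) unfolding prec_def by blast
    have "(sv, vf K2) \<in> RR (V - {vf K1})" by (rule hit2[OF a b])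
    then show False using assms(4) unfolding prec_def by blast
  qed
  then show ?thesis using ne unfolding prec_def by blast
qed

lemma T_F1:
  assumes H: "H \<in> HH" and K: "K \<in> HH" "K \<notin> CH H" "K \<noteq> H" and L: "L \<in> CH H"
  shows "(sv, vf L) \<in> RR (V - {vf K})"
proof -
  have a: "(sv, vf H) \<in> RR (V - {vf K})" using K unfolding CH_def by blast
  have b: "(sv, vf H) \<notin> RR (V - {vf L})" using L unfolding CH_def by blast
  show ?thesis by (rule hit2[OF a b])
qed

lemma T_after:
  assumes H: "H \<in> HH" and K: "K \<in> CH H" and L: "L \<in> CH H" and p: "prec K L"
  shows "(vf L, vf H) \<in> RR (V - {vf K})"
proof -
  have KH: "K \<in> HH" "K \<noteq> H" using K unfolding CH_def by auto
  have LH: "L \<in> HH" "L \<noteq> H" "(sv, vf H) \<notin> RR (V - {vf L})" using L unfolding CH_def by auto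
  have KL: "K \<noteq> L" "(sv, vf L) \<notin> RR (V - {vf K})" using p unfolding prec_def by auto
  show ?thesis
    by (rule tree_after[OF conn[OF sv_V vf_V[OF KH(1)]] conn[OF vf_V[OF H] vf_V[OF KH(1)]]
        sv_vf[OF KH(1)] vf_vf[OF H KH(1)] sv_vf[OF LH(1)] vf_vf[OF KH(1) LH(1) KL(1)]
        vf_vf[OF H LH(1)] vf_V[OF KH(1)] KL(2) LH(3)]) (use KH LH in auto)
qed

end


definition lprod :: "('a, 'b) monoid_scheme \<Rightarrow> 'a list \<Rightarrow> 'a" where
  "lprod G ks = foldr (\<lambda>x y. x \<otimes>\<^bsub>G\<^esub> y) ks \<one>\<^bsub>G\<^esub>"

context group
begin

lemma lprod_Nil[simp]: "lprod G [] = \<one>" by (simp add: lprod_def)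
lemma lprod_Cons[simp]: "lprod G (x # xs) = x \<otimes> lprod G xs" by (simp add: lprod_def)

lemma lprod_ones: "lprod G (replicate n \<one>) = \<one>"
  by (induction n) auto

lemma lprod_closed: "set ks \<subseteq> carrier G \<Longrightarrow> lprod G ks \<in> carrier G"
  by (induction ks) auto

lemma lprod_append: "set xs \<subseteq> carrier G \<Longrightarrow> set ys \<subseteq> carrier G \<Longrightarrow>
   lprod G (xs @ ys) = lprod G xs \<otimes> lprod G ys"
  by (induction xs) (auto simp: m_assoc lprod_closed)

lemma lprod_hom: "f \<in> auto G \<Longrightarrow> set ks \<subseteq> carrier G \<Longrightarrow> f (lprod G ks) = lprod G (map f ks)"
proof (induction ks)
  case Nil then show ?case using auto_one by simp
next
  case (Cons a ks)
  then show ?case using auto_mult[OF Cons(2), of a "lprod G ks"] lprod_closed by simp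
qed

lemma lprod_conj: "a \<in> carrier G \<Longrightarrow> set ks \<subseteq> carrier G \<Longrightarrow>
   lprod G (map (\<lambda>y. a \<otimes> y \<otimes> inv a) ks) = a \<otimes> lprod G ks \<otimes> inv a"
proof (induction ks)
  case Nil then show ?case by simp
next
  case (Cons k ks)
  have c: "lprod G ks \<in> carrier G" using Cons lprod_closed by simp
  have "lprod G (map (\<lambda>y. a \<otimes> y \<otimes> inv a) (k # ks)) = a \<otimes> k \<otimes> inv a \<otimes> (a \<otimes> lprod G ks \<otimes> inv a)"
    using Cons by simp
  also have "\<dots> = a \<otimes> (k \<otimes> lprod G ks) \<otimes> inv a"
    using Cons(2,3) c by (simp add: m_assoc inv_cancel_l)
  finally show ?case by simp
qed

lemma GI5:
  assumes "P \<in> carrier G" "k \<in> carrier G" "a \<in> carrier G" "S \<in> carrier G" "h \<in> carrier G"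
  shows "(P \<otimes> (k \<otimes> (a \<otimes> S \<otimes> inv a))) \<otimes> (a \<otimes> h \<otimes> inv a) \<otimes> inv (P \<otimes> (k \<otimes> (a \<otimes> S \<otimes> inv a)))
       = (P \<otimes> (k \<otimes> a \<otimes> S)) \<otimes> h \<otimes> inv (P \<otimes> (k \<otimes> a \<otimes> S))"
proof -
  define W where "W = P \<otimes> (k \<otimes> a \<otimes> S)"
  have Wc: "W \<in> carrier G" using assms by (simp add: W_def)
  have e: "P \<otimes> (k \<otimes> (a \<otimes> S \<otimes> inv a)) = W \<otimes> inv a" using assms by (simp add: W_def m_assoc)
  have "(W \<otimes> inv a) \<otimes> (a \<otimes> h \<otimes> inv a) \<otimes> inv (W \<otimes> inv a) = W \<otimes> h \<otimes> inv W"
    using assms Wc by (simp add: m_assoc inv_mult_group inv_cancel_l)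
  then show ?thesis unfolding e W_def .
qed

end

context tree_ctx
begin

definition Inv :: "('a \<Rightarrow> 'a) \<Rightarrow> bool" where
  "Inv \<psi> \<longleftrightarrow> (\<forall>H\<in>HH. \<exists>L ks. set L = CH H \<and> sorted_wrt prec L \<and> distinct L \<and>
      length ks = length L \<and> (\<forall>i<length L. ks ! i \<in> L ! i) \<and>
      (\<forall>h\<in>H. \<psi> h = lprod G ks \<otimes> h \<otimes> inv (lprod G ks)))"

lemma CH_sub: "CH H \<subseteq> HH" unfolding CH_def by blast

lemma HHc: "K \<in> HH \<Longrightarrow> K \<subseteq> carrier G" using sg subgroup.subset by blast

lemma Inv_id: "Inv (\<lambda>x\<in>carrier G. x)"
  unfolding Inv_def
proof
  fix H assume H: "H \<in> HH"
  have "\<exists>L. set L = CH H \<and> sorted_wrt prec L \<and> distinct L"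
  proof (rule exists_sorted[of "CH H" "CH H"])
    show "finite (CH H)" using finite_subset[OF CH_sub finHH] .
    show "\<forall>x\<in>CH H. \<forall>y\<in>CH H. x \<noteq> y \<longrightarrow> prec x y \<or> prec y x" using T_total[OF H] by blast
    show "\<forall>x\<in>CH H. \<forall>y\<in>CH H. \<forall>z\<in>CH H. prec x y \<longrightarrow> prec y z \<longrightarrow> prec x z"
      using T_trans CH_sub by blast
    show "\<forall>x. \<not> prec x x" unfolding prec_def by blast
  qed simp
  then obtain L where L: "set L = CH H" "sorted_wrt prec L" "distinct L" by blast
  let ?ks = "replicate (length L) \<one>"
  have "\<forall>i<length L. ?ks ! i \<in> L ! i"
  proof (intro allI impI)
    fix i assume "i < length L"
    then have "L ! i \<in> HH" using L(1) CH_sub nth_mem by blast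
    then show "?ks ! i \<in> L ! i" using sg subgroup.one_closed \<open>i < length L\<close> by fastforce
  qed
  moreover have "lprod G ?ks = \<one>" by (rule lprod_ones)
  moreover have "\<forall>h\<in>H. (\<lambda>x\<in>carrier G. x) h = \<one> \<otimes> h \<otimes> inv \<one>" using HHc[OF H] by auto
  ultimately show "\<exists>L ks. set L = CH H \<and> sorted_wrt prec L \<and> distinct L \<and>
      length ks = length L \<and> (\<forall>i<length L. ks ! i \<in> L ! i) \<and>
      (\<forall>h\<in>H. (\<lambda>x\<in>carrier G. x) h = lprod G ks \<otimes> h \<otimes> inv (lprod G ks))"
    using L by (intro exI[of _ L] exI[of _ ?ks]) simp
qed

lemma Inv_step:
  assumes c: "whitehead_carried G HH (petal_family V E lab) \<phi>"
    and rho: "\<rho> \<in> auto G" and inv\<rho>: "Inv \<rho>"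
  shows "Inv (compose (carrier G) \<phi> \<rho>)"
proof -
  obtain K x where K: "K \<in> HH" and x1: "x K = \<one>" and x2: "\<forall>H\<in>HH. x H \<in> K"
    and cw1': "\<forall>H1\<in>HH. \<forall>H2\<in>HH. H1 \<noteq> K \<longrightarrow> (vf H1, vf H2) \<in> RR (V - {vf K}) \<longrightarrow> x H1 = x H2"
    and cw2': "\<forall>H\<in>HH. (sv, vf H) \<in> RR (V - {vf K}) \<longrightarrow> x H = \<one>"
    and ph: "\<phi> \<in> auto G" and x6: "\<forall>H\<in>HH. \<forall>h\<in>H. \<phi> h = x H \<otimes> h \<otimes> inv (x H)"
    by (rule carried_E2[OF c])
  have cw1: "\<And>H1 H2. H1 \<in> HH \<Longrightarrow> H2 \<in> HH \<Longrightarrow> H1 \<noteq> K \<Longrightarrow> (vf H1, vf H2) \<in> RR (V - {vf K}) \<Longrightarrow> x H1 = x H2"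
    using cw1' by blast
  have cw2: "\<And>H. H \<in> HH \<Longrightarrow> (sv, vf H) \<in> RR (V - {vf K}) \<Longrightarrow> x H = \<one>" using cw2' by blast
  have xc: "x H \<in> carrier G" if "H \<in> HH" for H using x2 that HHc[OF K] by blast
  show ?thesis unfolding Inv_def
  proof
    fix H assume H: "H \<in> HH"
    from inv\<rho> H have "\<exists>L ks. set L = CH H \<and> sorted_wrt prec L \<and> distinct L \<and>
      length ks = length L \<and> (\<forall>i<length L. ks ! i \<in> L ! i) \<and>
      (\<forall>h\<in>H. \<rho> h = lprod G ks \<otimes> h \<otimes> inv (lprod G ks))" unfolding Inv_def by (rule bspec)
    then obtain L where "\<exists>ks. set L = CH H \<and> sorted_wrt prec L \<and> distinct L \<and>
      length ks = length L \<and> (\<forall>i<length L. ks ! i \<in> L ! i) \<and>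
      (\<forall>h\<in>H. \<rho> h = lprod G ks \<otimes> h \<otimes> inv (lprod G ks))" ..
    then obtain ks where LK: "set L = CH H \<and> sorted_wrt prec L \<and> distinct L \<and>
      length ks = length L \<and> (\<forall>i<length L. ks ! i \<in> L ! i) \<and>
      (\<forall>h\<in>H. \<rho> h = lprod G ks \<otimes> h \<otimes> inv (lprod G ks))" ..
    from LK have L1: "set L = CH H" by (elim conjE)
    from LK have L2: "sorted_wrt prec L" by (elim conjE)
    from LK have L3: "distinct L" by (elim conjE)
    from LK have L4: "length ks = length L" by (elim conjE)
    from LK have L5: "\<forall>i<length L. ks ! i \<in> L ! i" by (elim conjE)
    from LK have L6: "\<forall>h\<in>H. \<rho> h = lprod G ks \<otimes> h \<otimes> inv (lprod G ks)" by (elim conjE)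
    have LHH: "L ! i \<in> HH" if "i < length L" for i using L1 CH_sub nth_mem[OF that] by blast
    have LCH: "L ! i \<in> CH H" if "i < length L" for i using L1 nth_mem[OF that] by blast
    have ksc: "ks ! i \<in> carrier G" if "i < length L" for i using L5 that HHc[OF LHH[OF that]] by blast
    have ksC: "set ks \<subseteq> carrier G"
    proof
      fix y assume "y \<in> set ks"
      then obtain i where "i < length ks" "y = ks ! i" by (metis in_set_conv_nth)
      then show "y \<in> carrier G" using ksc L4 by simp
    qed
    have phk: "\<phi> (ks ! i) = x (L ! i) \<otimes> ks ! i \<otimes> inv (x (L ! i))" if "i < length L" for i
      using x6 LHH[OF that] L5 that by blast
    define w where "w = lprod G ks"
    have wc: "w \<in> carrier G" unfolding w_def using lprod_closed[OF ksC] .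
    have new: "compose (carrier G) \<phi> \<rho> h = lprod G (map \<phi> ks) \<otimes> \<phi> h \<otimes> inv (lprod G (map \<phi> ks))"
      if h: "h \<in> H" for h
    proof -
      have hc: "h \<in> carrier G" using h HHc[OF H] by blast
      have "compose (carrier G) \<phi> \<rho> h = \<phi> (w \<otimes> h \<otimes> inv w)"
        using hc L6 h by (simp add: compose_def w_def)
      also have "\<dots> = \<phi> w \<otimes> \<phi> h \<otimes> inv (\<phi> w)" using auto_conj[OF ph wc hc] .
      finally show ?thesis unfolding w_def using lprod_hom[OF ph ksC] by simp
    qed
    show "\<exists>L ks. set L = CH H \<and> sorted_wrt prec L \<and> distinct L \<and>
      length ks = length L \<and> (\<forall>i<length L. ks ! i \<in> L ! i) \<and>
      (\<forall>h\<in>H. compose (carrier G) \<phi> \<rho> h = lprod G ks \<otimes> h \<otimes> inv (lprod G ks))"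
    proof (cases "K \<in> set L")
      case False
      have K': "K \<notin> CH H" using False L1 by simp
      have xH: "x H = \<one>"
      proof (cases "K = H")
        case True then show ?thesis using x1 by simp
      next
        case False
        have "(sv, vf H) \<in> RR (V - {vf K})" using K' K False unfolding CH_def by blast
        then show ?thesis using cw2 H by blast
      qed
      have xL: "x (L ! i) = \<one>" if i: "i < length L" for i
      proof (cases "K = H")
        case True
        have a: "L ! i \<noteq> H" "(sv, vf H) \<notin> RR (V - {vf (L ! i)})" using LCH[OF i] unfolding CH_def by auto
        have "(sv, vf (L ! i)) \<in> RR (V - {vf H})" using T_antisym[OF H LHH[OF i] a(1)[symmetric]] a(2) by blast
        then show ?thesis using cw2[OF LHH[OF i]] True by blast
      next
        case False
        have "(sv, vf (L ! i)) \<in> RR (V - {vf K})" by (rule T_F1[OF H K K' False LCH[OF i]])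
        then show ?thesis using cw2[OF LHH[OF i]] by blast
      qed
      have "map \<phi> ks = ks"
      proof (rule nth_equalityI)
        show "length (map \<phi> ks) = length ks" by simp
        fix i assume "i < length (map \<phi> ks)"
        then have i: "i < length L" using L4 by simp
        show "map \<phi> ks ! i = ks ! i" using phk[OF i] xL[OF i] ksc[OF i] L4 i by simp
      qed
      moreover have "\<phi> h = h" if "h \<in> H" for h using x6 H that xH HHc[OF H] by auto
      ultimately have "\<forall>h\<in>H. compose (carrier G) \<phi> \<rho> h = lprod G ks \<otimes> h \<otimes> inv (lprod G ks)"
        using new by simp
      then show ?thesis using L1 L2 L3 L4 L5 by (intro exI[of _ L] exI[of _ ks] conjI)
    next
      case True
      then obtain j where j: "j < length L" "L ! j = K" by (metis in_set_conv_nth)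
      define a where "a = x H"
      have aK: "a \<in> K" unfolding a_def using x2 H by blast
      have ac: "a \<in> carrier G" using aK HHc[OF K] by blast
      have KCH: "K \<in> CH H" using LCH[OF j(1)] j(2) by simp
      have xlt: "x (L ! i) = \<one>" if i: "i < j" for i
      proof -
        have il: "i < length L" using i j by simp
        have p: "prec (L ! i) K" using sorted_wrt_nth_less[OF L2 i j(1)] j(2) by simp
        then have ne: "L ! i \<noteq> K" "(sv, vf K) \<notin> RR (V - {vf (L ! i)})" unfolding prec_def by auto
        have "(sv, vf (L ! i)) \<in> RR (V - {vf K})" using T_antisym[OF K LHH[OF il] ne(1)[symmetric]] ne(2) by blast
        then show ?thesis using cw2[OF LHH[OF il]] by blast
      qed
      have xgt: "x (L ! i) = a" if i: "j < i" "i < length L" for i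
      proof -
        have p: "prec K (L ! i)" using sorted_wrt_nth_less[OF L2 i(1) i(2)] j(2) by simp
        then have ne: "L ! i \<noteq> K" unfolding prec_def by auto
        have "(vf (L ! i), vf H) \<in> RR (V - {vf K})" by (rule T_after[OF H KCH LCH[OF i(2)] p])
        then show ?thesis unfolding a_def using cw1[OF LHH[OF i(2)] H ne] by blast
      qed
      define ks' where "ks' = ks[j := ks ! j \<otimes> a]"
      have jk: "j < length ks" using j L4 by simp
      define P where "P = lprod G (take j ks)"
      define S where "S = lprod G (drop (Suc j) ks)"
      have tC: "set (take j ks) \<subseteq> carrier G" by (rule subset_trans[OF set_take_subset ksC])
      have dC: "set (drop (Suc j) ks) \<subseteq> carrier G" by (rule subset_trans[OF set_drop_subset ksC])
      have Pc: "P \<in> carrier G" unfolding P_def using lprod_closed[OF tC] .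
      have Sc: "S \<in> carrier G" unfolding S_def using lprod_closed[OF dC] .
      have kc: "ks ! j \<in> carrier G" using ksc[OF j(1)] .
      have m1: "map \<phi> (take j ks) = take j ks"
      proof (rule nth_equalityI)
        show "length (map \<phi> (take j ks)) = length (take j ks)" by simp
        fix i assume "i < length (map \<phi> (take j ks))"
        then have i: "i < j" "i < length L" using jk L4 by auto
        show "map \<phi> (take j ks) ! i = take j ks ! i"
          using phk[OF i(2)] xlt[OF i(1)] ksc[OF i(2)] i jk by simp
      qed
      have m2: "map \<phi> (drop (Suc j) ks) = map (\<lambda>y. a \<otimes> y \<otimes> inv a) (drop (Suc j) ks)"
      proof (rule nth_equalityI)
        show "length (map \<phi> (drop (Suc j) ks)) = length (map (\<lambda>y. a \<otimes> y \<otimes> inv a) (drop (Suc j) ks))" by simp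
        fix i assume "i < length (map \<phi> (drop (Suc j) ks))"
        then have i: "j < Suc j + i" "Suc j + i < length L" using L4 by auto
        show "map \<phi> (drop (Suc j) ks) ! i = map (\<lambda>y. a \<otimes> y \<otimes> inv a) (drop (Suc j) ks) ! i"
          using phk[OF i(2)] xgt[OF i] i L4 by simp
      qed
      have m3: "\<phi> (ks ! j) = ks ! j" using phk[OF j(1)] j(2) x1 kc by simp
      have split: "ks = take j ks @ ks ! j # drop (Suc j) ks" using id_take_nth_drop[OF jk] .
      have "map \<phi> ks = take j ks @ ks ! j # map (\<lambda>y. a \<otimes> y \<otimes> inv a) (drop (Suc j) ks)"
        by (subst split) (simp add: m1 m2 m3)
      moreover have mc: "set (ks ! j # map (\<lambda>y. a \<otimes> y \<otimes> inv a) (drop (Suc j) ks)) \<subseteq> carrier G"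
        using dC ac kc by auto
      ultimately have pw: "lprod G (map \<phi> ks) = P \<otimes> (ks ! j \<otimes> (a \<otimes> S \<otimes> inv a))"
        using lprod_append[OF tC mc] lprod_conj[OF ac dC]
        unfolding P_def S_def by simp
      have ks'_eq: "ks' = take j ks @ (ks ! j \<otimes> a) # drop (Suc j) ks"
        unfolding ks'_def using upd_conv_take_nth_drop[OF jk] .
      have mc': "set ((ks ! j \<otimes> a) # drop (Suc j) ks) \<subseteq> carrier G" using dC ac kc by auto
      have pw': "lprod G ks' = P \<otimes> (ks ! j \<otimes> a \<otimes> S)"
        using lprod_append[OF tC mc'] unfolding ks'_eq P_def S_def by simp
      have phh: "\<phi> h = a \<otimes> h \<otimes> inv a" if "h \<in> H" for h using x6 H that unfolding a_def by blast
      have eq: "\<forall>h\<in>H. compose (carrier G) \<phi> \<rho> h = lprod G ks' \<otimes> h \<otimes> inv (lprod G ks')"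
      proof
        fix h assume h: "h \<in> H"
        have hc: "h \<in> carrier G" using h HHc[OF H] by blast
        show "compose (carrier G) \<phi> \<rho> h = lprod G ks' \<otimes> h \<otimes> inv (lprod G ks')"
          unfolding new[OF h] pw pw' phh[OF h] using GI5[OF Pc kc ac Sc hc] .
      qed
      have len': "length ks' = length L" unfolding ks'_def using L4 by simp
      have mem': "\<forall>i<length L. ks' ! i \<in> L ! i"
      proof (intro allI impI)
        fix i assume i: "i < length L"
        show "ks' ! i \<in> L ! i"
        proof (cases "i = j")
          case True
          have "ks ! j \<in> K" using L5 j by auto
          then have "ks ! j \<otimes> a \<in> K" using subgroup.m_closed[OF bspec[OF sg K] _ aK] by blast
          then show ?thesis using True jk j(2) unfolding ks'_def by simp
        next
          case False
          then show ?thesis using L5 i unfolding ks'_def by simp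
        qed
      qed
      show ?thesis using L1 L2 L3 len' mem' eq by (intro exI[of _ L] exI[of _ ks'] conjI)
    qed
  qed
qed

lemma Inv_W: "\<rho> \<in> whitehead_products G HH (petal_family V E lab) \<Longrightarrow> Inv \<rho>"
proof (induction rule: whitehead_products.induct)
  case wp_id then show ?case by (rule Inv_id)
next
  case (wp_step \<phi> \<rho>)
  show ?case by (rule Inv_step[OF wp_step(1) wp_auto[OF wp_step(2)] wp_step(3)])
qed

definition Bnd :: "'a set" where
  "Bnd = (\<lambda>(ks, h). lprod G ks \<otimes> h \<otimes> inv (lprod G ks)) `
          ({ks. set ks \<subseteq> \<Union>HH \<and> length ks \<le> card HH} \<times> \<Union>HH)"

lemma finite_Bnd: "finite Bnd"
proof -
  have f: "finite (\<Union>HH)" using finHH finH by blast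
  have "finite {ks. set ks \<subseteq> \<Union>HH \<and> length ks \<le> card HH}"
    by (rule finite_lists_length_le[OF f])
  then show ?thesis unfolding Bnd_def using f by blast
qed

lemma Inv_Bnd:
  assumes "Inv \<psi>" "H \<in> HH" "h \<in> H"
  shows "\<psi> h \<in> Bnd"
proof -
  from assms(1,2) have "\<exists>L ks. set L = CH H \<and> sorted_wrt prec L \<and> distinct L \<and>
      length ks = length L \<and> (\<forall>i<length L. ks ! i \<in> L ! i) \<and>
      (\<forall>h\<in>H. \<psi> h = lprod G ks \<otimes> h \<otimes> inv (lprod G ks))" unfolding Inv_def by (rule bspec)
  then obtain L where "\<exists>ks. set L = CH H \<and> sorted_wrt prec L \<and> distinct L \<and>
      length ks = length L \<and> (\<forall>i<length L. ks ! i \<in> L ! i) \<and>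
      (\<forall>h\<in>H. \<psi> h = lprod G ks \<otimes> h \<otimes> inv (lprod G ks))" ..
  then obtain ks where LK: "set L = CH H \<and> sorted_wrt prec L \<and> distinct L \<and>
      length ks = length L \<and> (\<forall>i<length L. ks ! i \<in> L ! i) \<and>
      (\<forall>h\<in>H. \<psi> h = lprod G ks \<otimes> h \<otimes> inv (lprod G ks))" ..
  from LK have L1: "set L = CH H" by (elim conjE)
  from LK have L3: "distinct L" by (elim conjE)
  from LK have L4: "length ks = length L" by (elim conjE)
  from LK have L5: "\<forall>i<length L. ks ! i \<in> L ! i" by (elim conjE)
  from LK have L6: "\<forall>h\<in>H. \<psi> h = lprod G ks \<otimes> h \<otimes> inv (lprod G ks)" by (elim conjE)
  have "length ks = card (CH H)" using L4 distinct_card[OF L3] L1 by simp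
  also have "\<dots> \<le> card HH" by (rule card_mono[OF finHH CH_sub])
  finally have len: "length ks \<le> card HH" .
  have sks: "set ks \<subseteq> \<Union>HH"
  proof
    fix y assume "y \<in> set ks"
    then obtain i where i: "i < length ks" "y = ks ! i" by (metis in_set_conv_nth)
    then have "L ! i \<in> HH" using L1 L4 CH_sub nth_mem[of i L] by auto
    moreover have "y \<in> L ! i" using L5 i L4 by simp
    ultimately show "y \<in> \<Union>HH" by blast
  qed
  have hU: "h \<in> \<Union>HH" using assms(2,3) by blast
  have "\<psi> h = (\<lambda>(ks, h). lprod G ks \<otimes> h \<otimes> inv (lprod G ks)) (ks, h)" using L6 assms(3) by simp
  moreover have "(ks, h) \<in> {ks. set ks \<subseteq> \<Union>HH \<and> length ks \<le> card HH} \<times> \<Union>HH"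
    using len sks hU by blast
  ultimately show ?thesis unfolding Bnd_def by blast
qed

end

context group
begin

lemma tree_bounded:
  assumes q: "marked_tree G n Gf q" and fin: "\<forall>i<n. finite (Gf i)"
  shows "\<exists>T. finite T \<and> (\<forall>\<psi>\<in>whitehead_products G (fst q) (snd q). \<forall>H\<in>fst q. \<forall>h\<in>H. \<psi> h \<in> T)"
proof -
  from q have b: "is_basis G n Gf (fst q)" and t: "tree_family (basis_labels (fst q)) (snd q)"
    by (auto simp: marked_tree_def)
  from b[unfolded is_basis_def] obtain Hf where Hf0: "fst q = Hf ` {..<n} \<and>
      (\<forall>i<n. \<exists>g\<in>carrier G. Hf i = conj_set G g (Gf i)) \<and> is_free_product G Hf {..<n}" ..
  from Hf0 have Hf1: "fst q = Hf ` {..<n}" by (elim conjE)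
  from Hf0 have Hf2: "\<forall>i<n. \<exists>g\<in>carrier G. Hf i = conj_set G g (Gf i)" by (elim conjE)
  have finHH: "finite (fst q)" unfolding Hf1 by simp
  have finH: "\<forall>H\<in>fst q. finite H"
  proof
    fix H assume "H \<in> fst q"
    then obtain i where i: "i < n" "H = Hf i" unfolding Hf1 by blast
    then obtain g where "Hf i = conj_set G g (Gf i)" using Hf2 by blast
    then show "finite H" using i fin unfolding conj_set_def by simp
  qed
  have sg: "\<forall>H\<in>fst q. subgroup H G" using marked_props[OF q] by blast
  from t[unfolded tree_family_def] obtain V where
     "\<exists>E lab. pointed_labelled_tree (basis_labels (fst q)) V E lab \<and> snd q = petal_family V E lab" ..
  then obtain E where "\<exists>lab. pointed_labelled_tree (basis_labels (fst q)) V E lab \<and> snd q = petal_family V E lab" ..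
  then obtain lab where TA: "pointed_labelled_tree (basis_labels (fst q)) V E lab \<and> snd q = petal_family V E lab" ..
  from TA have T: "pointed_labelled_tree (basis_labels (fst q)) V E lab" by (elim conjE)
  from TA have A: "snd q = petal_family V E lab" by (elim conjE)
  have tc: "tree_ctx G (fst q) V E lab"
    unfolding tree_ctx_def tree_ctx_axioms_def using is_group T sg finHH finH by blast
  show ?thesis
  proof (intro exI conjI)
    show "finite (tree_ctx.Bnd G (fst q))" using tree_ctx.finite_Bnd[OF tc] .
    show "\<forall>\<psi>\<in>whitehead_products G (fst q) (snd q). \<forall>H\<in>fst q. \<forall>h\<in>H. \<psi> h \<in> tree_ctx.Bnd G (fst q)"
      unfolding A using tree_ctx.Inv_Bnd[OF tc tree_ctx.Inv_W[OF tc]] by blast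
  qed
qed

end


context group
begin

lemma word_prod_closed:
  "\<forall>a\<in>set w. snd a \<in> carrier G \<Longrightarrow> word_prod G w \<in> carrier G"
  by (induction w) (auto simp: word_prod_def)

lemma auto_eq_word:
  assumes f1: "f1 \<in> auto G" and f2: "f2 \<in> auto G"
  shows "(\<forall>a\<in>set w. snd a \<in> carrier G \<and> f1 (snd a) = f2 (snd a)) \<Longrightarrow> f1 (word_prod G w) = f2 (word_prod G w)"
proof (induction w)
  case Nil then show ?case using auto_one[OF f1] auto_one[OF f2] by (simp add: word_prod_def)
next
  case (Cons a w)
  have wc: "word_prod G w \<in> carrier G" using word_prod_closed Cons.prems by auto
  have ac: "snd a \<in> carrier G" using Cons.prems by simp
  have e: "word_prod G (a # w) = snd a \<otimes> word_prod G w" by (simp add: word_prod_def)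
  show ?case unfolding e using auto_mult[OF f1 ac wc] auto_mult[OF f2 ac wc] Cons by simp
qed

lemma auto_eq_on_gen:
  assumes fp: "is_free_product G Hf {..<n}" and f1: "f1 \<in> auto G" and f2: "f2 \<in> auto G"
    and agree: "\<forall>i<n. \<forall>h\<in>Hf i. f1 h = f2 h"
  shows "f1 = f2"
proof (rule extensionalityI[OF auto_ext[OF f1] auto_ext[OF f2]])
  fix g assume g: "g \<in> carrier G"
  have sg: "\<forall>i\<in>{..<n}. subgroup (Hf i) G" using fp unfolding is_free_product_def by (elim conjE)
  have "\<forall>g\<in>carrier G. \<exists>!w. reduced_word G Hf {..<n} w \<and> word_prod G w = g"
    using fp unfolding is_free_product_def by (elim conjE)
  then obtain w where w: "reduced_word G Hf {..<n} w" "word_prod G w = g" using g by blast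
  have "\<forall>a\<in>set w. snd a \<in> carrier G \<and> f1 (snd a) = f2 (snd a)"
  proof
    fix a assume a: "a \<in> set w"
    obtain i y where iy: "a = (i, y)" by (cases a)
    have "i \<in> {..<n}" "y \<in> Hf i" using w(1) a iy unfolding reduced_word_def by auto
    then show "snd a \<in> carrier G \<and> f1 (snd a) = f2 (snd a)"
      using iy agree sg subgroup.subset by fastforce
  qed
  then show "f1 g = f2 g" using auto_eq_word[OF f1 f2] w(2) by blast
qed

end

theorem proposition4p1:
  fixes G :: "('a, 'b) monoid_scheme" and n :: nat and Gf :: "nat \<Rightarrow> 'a set"
    and \<sigma> :: "'a marked set set"
  assumes "is_free_product G Gf {..<n}"
    and "\<forall>i<n. finite (Gf i) \<and> Gf i \<noteq> {\<one>\<^bsub>G\<^esub>}"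
    and "L_simplex G n Gf \<sigma>"
  shows "finite (simplex_stabilizer G n Gf \<sigma>)"
proof -
  have grp: "group G" using assms(1) unfolding is_free_product_def by (elim conjE)
  interpret group G by (rule grp)
  have fin: "\<forall>i<n. finite (Gf i)" using assms(2) by blast
  have sf: "finite \<sigma>" "\<sigma> \<noteq> {}" "\<sigma> \<subseteq> L_vertices G n Gf" using assms(3) unfolding L_simplex_def by blast+
  obtain c where c: "c \<in> \<sigma>" using sf(2) by blast
  then obtain p0 where p0: "marked_tree G n Gf p0" "c = mclass G n Gf p0"
    using sf(3) unfolding L_vertices_def by blast
  from p0(1) have b0: "is_basis G n Gf (fst p0)" by (simp add: marked_tree_def)
  from b0[unfolded is_basis_def] obtain Hf where Hf0: "fst p0 = Hf ` {..<n} \<and>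
      (\<forall>i<n. \<exists>g\<in>carrier G. Hf i = conj_set G g (Gf i)) \<and> is_free_product G Hf {..<n}" ..
  from Hf0 have Hf1: "fst p0 = Hf ` {..<n}" by (elim conjE)
  from Hf0 have Hf2: "\<forall>i<n. \<exists>g\<in>carrier G. Hf i = conj_set G g (Gf i)" by (elim conjE)
  from Hf0 have Hf3: "is_free_product G Hf {..<n}" by (elim conjE)
  define U0 where "U0 = \<Union>(fst p0)"
  have finU0: "finite U0"
  proof -
    have "\<forall>H\<in>fst p0. finite H"
    proof
      fix H assume "H \<in> fst p0"
      then obtain i where i: "i < n" "H = Hf i" unfolding Hf1 by blast
      then obtain g where "Hf i = conj_set G g (Gf i)" using Hf2 by blast
      then show "finite H" using i fin unfolding conj_set_def by simp
    qed
    then show ?thesis unfolding U0_def Hf1 by simp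
  qed
  define qf where "qf d = (SOME q. marked_tree G n Gf q \<and> d = mclass G n Gf q)" for d
  have qf: "marked_tree G n Gf (qf d) \<and> d = mclass G n Gf (qf d)" if "d \<in> \<sigma>" for d
  proof -
    have "\<exists>q. marked_tree G n Gf q \<and> d = mclass G n Gf q" using that sf(3) unfolding L_vertices_def by blast
    then show ?thesis unfolding qf_def by (rule someI_ex)
  qed
  define Tf where "Tf q = (SOME T. finite T \<and> (\<forall>\<psi>\<in>whitehead_products G (fst q) (snd q). \<forall>H\<in>fst q. \<forall>h\<in>H. \<psi> h \<in> T))" for q
  have Tf: "finite (Tf q) \<and> (\<forall>\<psi>\<in>whitehead_products G (fst q) (snd q). \<forall>H\<in>fst q. \<forall>h\<in>H. \<psi> h \<in> Tf q)"
    if "marked_tree G n Gf q" for q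
    unfolding Tf_def by (rule someI_ex[OF tree_bounded[OF that fin]])
  define Tall where "Tall = (\<Union>d\<in>\<sigma>. Tf (qf d))"
  have finT: "finite Tall" unfolding Tall_def using sf(1) Tf qf by blast
  have p0c: "p0 \<in> c" unfolding p0(2) mclass_def ident_def by simp
  have key: "\<phi> \<in> auto G \<and> (\<forall>u\<in>U0. \<phi> u \<in> Tall)" if ph: "\<phi> \<in> simplex_stabilizer G n Gf \<sigma>" for \<phi>
  proof -
    have pa: "\<phi> \<in> auto G" using ph unfolding simplex_stabilizer_def Aut_eq by blast
    have "act_class G n Gf \<phi> ` \<sigma> = \<sigma>" using ph unfolding simplex_stabilizer_def by blast
    then have dS: "act_class G n Gf \<phi> c \<in> \<sigma>" using c by blast
    define d where "d = act_class G n Gf \<phi> c"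
    have "act_marked \<phi> p0 \<in> d" unfolding d_def act_class_def ident_def using p0c by blast
    then have "(qf d, act_marked \<phi> p0) \<in> ident G n Gf" using qf[OF dS[folded d_def]] unfolding mclass_def by blast
    then obtain \<psi> where psi: "\<psi> \<in> whitehead_products G (fst (qf d)) (snd (qf d))"
      "act_marked \<phi> p0 = act_marked \<psi> (qf d)"
      using class_orbit qf[OF dS[folded d_def]] by blast
    have e: "(`) \<phi> ` fst p0 = (`) \<psi> ` fst (qf d)" using psi(2) unfolding act_marked_def by simp
    have "\<phi> u \<in> Tall" if u: "u \<in> U0" for u
    proof -
      obtain H where H: "H \<in> fst p0" "u \<in> H" using u unfolding U0_def by blast
      have "\<phi> ` H \<in> (`) \<psi> ` fst (qf d)" using e H(1) by blast
      then obtain H' where H': "H' \<in> fst (qf d)" "\<phi> ` H = \<psi> ` H'" by blast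
      have "\<phi> u \<in> \<psi> ` H'" using H'(2) H(2) by blast
      then obtain h' where h': "h' \<in> H'" "\<phi> u = \<psi> h'" by blast
      have tfq: "\<forall>\<psi>\<in>whitehead_products G (fst (qf d)) (snd (qf d)). \<forall>H\<in>fst (qf d). \<forall>h\<in>H. \<psi> h \<in> Tf (qf d)"
        using Tf[OF conjunct1[OF qf[OF dS[folded d_def]]]] by (rule conjunct2)
      have "\<psi> h' \<in> Tf (qf d)" using tfq[rule_format, OF psi(1) H'(1) h'(1)] .
      then have "\<phi> u \<in> Tf (qf d)" using h'(2) by simp
      then show ?thesis unfolding Tall_def by (rule UN_I[OF dS[folded d_def]])
    qed
    then show ?thesis using pa by blast
  qed
  define S where "S = {\<phi> \<in> auto G. \<forall>u\<in>U0. \<phi> u \<in> Tall}"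
  have sub: "simplex_stabilizer G n Gf \<sigma> \<subseteq> S" unfolding S_def using key by blast
  have inj: "inj_on (\<lambda>\<phi>. restrict \<phi> U0) S"
  proof (rule inj_onI)
    fix f1 f2 assume f: "f1 \<in> S" "f2 \<in> S" "restrict f1 U0 = restrict f2 U0"
    have "\<forall>i<n. \<forall>h\<in>Hf i. f1 h = f2 h"
    proof (intro allI impI ballI)
      fix i h assume "i < n" "h \<in> Hf i"
      then have "h \<in> U0" unfolding U0_def Hf1 by blast
      then show "f1 h = f2 h" using f(3) by (metis restrict_apply')
    qed
    then show "f1 = f2" using auto_eq_on_gen[OF Hf3] f(1,2) unfolding S_def by blast
  qed
  have "(\<lambda>\<phi>. restrict \<phi> U0) ` S \<subseteq> PiE U0 (\<lambda>_. Tall)" unfolding S_def by auto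
  then have "finite ((\<lambda>\<phi>. restrict \<phi> U0) ` S)"
    using finite_PiE[OF finU0, of "\<lambda>_. Tall"] finT finite_subset by blast
  then have "finite S" using finite_imageD[OF _ inj] by blast
  then show ?thesis using finite_subset[OF sub] by blast
qed


end
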